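(* For $n\in\mathbb{N}$ put $E_n(X):=e^{nX}$ and $L_n(X):=\dfrac{e^{X}q^{n}}{1-e^{X}q^{n}}\in\mathbb{Q}[[q,X]]$. For every $l\ge 1$ the generating series of bi-brackets (defined in the context) satisfies \[ T\binom{X_1,\dots,X_l}{Y_1,\dots,Y_l}=\sum_{u_1>\dots>u_l>0}\prod_{j=1}^{l}E_{u_j}(Y_j)\,L_{u_j}(X_j) =\sum_{u_1>\dots>u_l>0}\prod_{j=1}^{l}E_{u_j}(X_{l+1-j}-X_{l+2-j})\,L_{u_j}(Y_1+\dots+Y_{l-j+1}), \] where $X_{l+1}:=0$. In particular the partition relation holds: \[ T\binom{X_1,\dots,X_l}{Y_1,\dots,Y_l}=T\binom{Y_1+\dots+Y_l,\ \dots,\ Y_1+Y_2,\ Y_1}{X_l,\ X_{l-1}-X_l,\ \dots,\ X_1-X_2}. \]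
   Context: For integers $s_1,\dots,s_l\ge1$ and $r_1,\dots,r_l\ge0$ the bi-bracket is the $q$-series \[ \binom{s_1,\dots,s_l}{r_1,\dots,r_l}:=\sum_{\substack{u_1>\dots>u_l>0\\ v_1,\dots,v_l>0}}\prod_{j=1}^{l}\frac{u_j^{r_j}}{r_j!}\,\frac{v_j^{s_j-1}}{(s_j-1)!}\;q^{u_1v_1+\dots+u_lv_l}\in\mathbb{Q}[[q]]. \] Its generating series is \[ T\binom{X_1,\dots,X_l}{Y_1,\dots,Y_l}:=\sum_{\substack{s_1,\dots,s_l>0\\ r_1,\dots,r_l>0}}\binom{s_1,\dots,s_l}{r_1-1,\dots,r_l-1}X_1^{s_1-1}\cdots X_l^{s_l-1}\,Y_1^{r_1-1}\cdots Y_l^{r_l-1}, \] a formal power series in $X_1,\dots,X_l,Y_1,\dots,Y_l$ with coefficients in $\mathbb{Q}[[q]]$. All identities are identities of formal power series in $q$ and the variables. *)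

theory Defs
  imports "HOL-Library.Poly_Mapping" "HOL-Computational_Algebra.Formal_Power_Series"
begin

datatype var = Q | X nat | Y nat

text \<open>A monomial is a finitely supported exponent vector; a formal power series
  (with rational coefficients) is its coefficient function on monomials.\<close>
type_synonym mono = "var \<Rightarrow>\<^sub>0 nat"
type_synonym mps = "mono \<Rightarrow> rat"

definition mps_const :: "rat \<Rightarrow> mps" where
  "mps_const c = (\<lambda>m. if m = 0 then c else 0)"

definition mps_var :: "var \<Rightarrow> mps" where
  "mps_var v = (\<lambda>m. if m = Poly_Mapping.single v 1 then 1 else 0)"

definition mps_add :: "mps \<Rightarrow> mps \<Rightarrow> mps" where
  "mps_add f g = (\<lambda>m. f m + g m)"

definition mps_smult :: "rat \<Rightarrow> mps \<Rightarrow> mps" where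
  "mps_smult c f = (\<lambda>m. c * f m)"

definition mps_sub :: "mps \<Rightarrow> mps \<Rightarrow> mps" where
  "mps_sub f g = (\<lambda>m. f m - g m)"

definition mps_mult :: "mps \<Rightarrow> mps \<Rightarrow> mps" where
  "mps_mult f g = (\<lambda>m. \<Sum>p\<in>{p. fst p + snd p = m}. f (fst p) * g (snd p))"

definition mps_power :: "mps \<Rightarrow> nat \<Rightarrow> mps" where
  "mps_power f k = ((mps_mult f) ^^ k) (mps_const 1)"

definition mps_listprod :: "mps list \<Rightarrow> mps" where
  "mps_listprod fs = foldr mps_mult fs (mps_const 1)"

definition mps_listsum :: "mps list \<Rightarrow> mps" where
  "mps_listsum fs = foldr mps_add fs (mps_const 0)"

text \<open>Sum of a (possibly infinite) family, taken coefficientwise (formal convergence: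
  each coefficient receives only finitely many nonzero contributions).\<close>
definition mps_sum :: "('i \<Rightarrow> mps) \<Rightarrow> 'i set \<Rightarrow> mps" where
  "mps_sum F I = (\<lambda>m. \<Sum>i\<in>{i\<in>I. F i m \<noteq> 0}. F i m)"

text \<open>Exponential of a series without constant term.\<close>
definition mps_exp :: "mps \<Rightarrow> mps" where
  "mps_exp f = mps_sum (\<lambda>k. mps_smult (1 / fact k) (mps_power f k)) UNIV"

text \<open>Multiplicative inverse of a series with constant term 1: f^(-1) = sum_k (1 - f)^k.\<close>
definition mps_inverse :: "mps \<Rightarrow> mps" where
  "mps_inverse f = mps_sum (\<lambda>k. mps_power (mps_sub (mps_const 1) f) k) UNIV"

text \<open>Substitution of series (without constant term) for the variables.\<close>
definition mono_eval :: "(var \<Rightarrow> mps) \<Rightarrow> mono \<Rightarrow> mps" where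
  "mono_eval \<sigma> m = Finite_Set.fold (\<lambda>v acc. mps_mult (mps_power (\<sigma> v) (Poly_Mapping.lookup m v)) acc)
      (mps_const 1) (Poly_Mapping.keys m)"

definition mps_subst :: "(var \<Rightarrow> mps) \<Rightarrow> mps \<Rightarrow> mps" where
  "mps_subst \<sigma> f = mps_sum (\<lambda>m. mps_smult (f m) (mono_eval \<sigma> m)) UNIV"

definition En :: "nat \<Rightarrow> mps \<Rightarrow> mps" where
  "En n Z = mps_exp (mps_smult (of_nat n) Z)"

definition Ln :: "nat \<Rightarrow> mps \<Rightarrow> mps" where
  "Ln n Z = (let w = mps_mult (mps_exp Z) (mps_power (mps_var Q) n)
             in mps_mult w (mps_inverse (mps_sub (mps_const 1) w)))"

text \<open>Bi-bracket with s = [s_1,...,s_l], r = [r_1,...,r_l] (list index 0 is index 1).\<close>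
definition bibracket :: "nat list \<Rightarrow> nat list \<Rightarrow> rat fps" where
  "bibracket s r = Abs_fps (\<lambda>N.
     \<Sum>(u, v)\<in>{(u, v). length u = length s \<and> length v = length s
                      \<and> sorted_wrt (>) u \<and> (\<forall>x\<in>set u. 0 < x) \<and> (\<forall>x\<in>set v. 0 < x)
                      \<and> (\<Sum>j<length s. u ! j * v ! j) = N}.
       \<Prod>j<length s. (of_nat (u ! j)) ^ (r ! j) / fact (r ! j)
                    * (of_nat (v ! j)) ^ (s ! j - 1) / fact (s ! j - 1))"

text \<open>Generating series T in the variables q, X_1..X_l, Y_1..Y_l: the coefficient of
  q^N X^a Y^b is the q^N-coefficient of the bi-bracket with s_j = a_j + 1, r_j - 1 = b_j.\<close>
definition Tgen :: "nat \<Rightarrow> mps" where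
  "Tgen l = (\<lambda>m. if Poly_Mapping.keys m \<subseteq> {Q} \<union> {X j |j. 1 \<le> j \<and> j \<le> l} \<union> {Y j |j. 1 \<le> j \<and> j \<le> l}
     then fps_nth (bibracket (map (\<lambda>j. Poly_Mapping.lookup m (X j) + 1) [1..<l+1])
                             (map (\<lambda>j. Poly_Mapping.lookup m (Y j)) [1..<l+1])) (Poly_Mapping.lookup m Q)
     else 0)"

text \<open>Index set u_1 > ... > u_l > 0 (u ! (j-1) = u_j).\<close>
definition decr_tuples :: "nat \<Rightarrow> nat list set" where
  "decr_tuples l = {u. length u = l \<and> sorted_wrt (>) u \<and> (\<forall>x\<in>set u. 0 < x)}"

definition Xv :: "nat \<Rightarrow> nat \<Rightarrow> mps" where
  "Xv l i = (if i = l + 1 then mps_const 0 else mps_var (X i))"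

definition Ysum :: "nat \<Rightarrow> mps" where
  "Ysum k = mps_listsum (map (\<lambda>i. mps_var (Y i)) [1..<k+1])"

end

theory Submission
  imports Defs
begin

abbreviation lk where "lk \<equiv> Poly_Mapping.lookup"
abbreviation ks where "ks \<equiv> Poly_Mapping.keys"

lemma finite_below_mono: fixes m :: "'a \<Rightarrow>\<^sub>0 nat" shows "finite {a::'a \<Rightarrow>\<^sub>0 nat. \<forall>w. Poly_Mapping.lookup a w \<le> Poly_Mapping.lookup m w}"
proof -
  let ?f = "\<lambda>a::'a \<Rightarrow>\<^sub>0 nat. restrict (Poly_Mapping.lookup a) (Poly_Mapping.keys m)"
  have inj: "inj_on ?f {a. \<forall>w. Poly_Mapping.lookup a w \<le> Poly_Mapping.lookup m w}"
  proof (rule inj_onI)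
    fix a b assume a: "a \<in> {a. \<forall>w. Poly_Mapping.lookup a w \<le> Poly_Mapping.lookup m w}" and b: "b \<in> {a. \<forall>w. Poly_Mapping.lookup a w \<le> Poly_Mapping.lookup m w}"
      and e: "?f a = ?f b"
    show "a = b"
    proof (rule poly_mapping_eqI)
      fix w show "Poly_Mapping.lookup a w = Poly_Mapping.lookup b w"
      proof (cases "w \<in> Poly_Mapping.keys m")
        case True then show ?thesis using fun_cong[OF e, of w] by simp
      next
        case False then have "Poly_Mapping.lookup m w = (0::nat)" by (simp add: in_keys_iff)
        moreover have "Poly_Mapping.lookup a w \<le> Poly_Mapping.lookup m w" "Poly_Mapping.lookup b w \<le> Poly_Mapping.lookup m w" using a b by auto
        ultimately show ?thesis by linarith
      qed
    qed
  qed
  have "?f ` {a. \<forall>w. Poly_Mapping.lookup a w \<le> Poly_Mapping.lookup m w} \<subseteq> PiE (Poly_Mapping.keys m) (\<lambda>w. {..Poly_Mapping.lookup m w})"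
    by (auto simp: PiE_def Pi_def)
  moreover have "finite (PiE (Poly_Mapping.keys m) (\<lambda>w. {..Poly_Mapping.lookup m w}))" by (rule finite_PiE) auto
  ultimately have "finite (?f ` {a. \<forall>w. Poly_Mapping.lookup a w \<le> Poly_Mapping.lookup m w})" by (rule finite_subset)
  then show ?thesis using inj by (rule finite_imageD)
qed

lemma finite_pairs: "finite {p::('a \<Rightarrow>\<^sub>0 nat) \<times> ('a \<Rightarrow>\<^sub>0 nat). fst p + snd p = m}"
proof -
  have "{p::('a \<Rightarrow>\<^sub>0 nat) \<times> ('a \<Rightarrow>\<^sub>0 nat). fst p + snd p = m} \<subseteq>
     {a. \<forall>w. Poly_Mapping.lookup a w \<le> Poly_Mapping.lookup m w} \<times> {a. \<forall>w. Poly_Mapping.lookup a w \<le> Poly_Mapping.lookup m w}"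
    by (auto simp: Poly_Mapping.lookup_add)
  then show ?thesis using finite_below_mono finite_subset by blast
qed


lemma mult_comm: "mps_mult f g = mps_mult g f"
proof
  fix m
  show "mps_mult f g m = mps_mult g f m"
    unfolding mps_mult_def
    by (rule sum.reindex_bij_witness[of _ prod.swap prod.swap]) (auto simp: add.commute)
qed

lemma mult_one: "mps_mult (mps_const 1) f = f"
proof
  fix m
  have "mps_mult (mps_const 1) f m = (\<Sum>p\<in>{p. fst p + snd p = m}. if p = (0, m) then f m else 0)"
    unfolding mps_mult_def mps_const_def
    by (rule sum.cong) (auto simp: prod_eq_iff)
  also have "\<dots> = f m" by (simp add: finite_pairs)
  finally show "mps_mult (mps_const 1) f m = f m" .
qed

lemma mult_zero: "mps_mult (mps_const 0) f = mps_const 0"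
  by (auto simp: mps_mult_def mps_const_def fun_eq_iff)

lemma mult_add: "mps_mult f (mps_add g h) = mps_add (mps_mult f g) (mps_mult f h)"
  by (auto simp: mps_mult_def mps_add_def fun_eq_iff algebra_simps sum.distrib)

lemma mult_smult: "mps_mult (mps_smult c f) g = mps_smult c (mps_mult f g)"
  by (auto simp: mps_mult_def mps_smult_def fun_eq_iff algebra_simps sum_distrib_left)

lemma mult_assoc: "mps_mult (mps_mult f g) h = mps_mult f (mps_mult g h)"
proof
  fix m
  let ?P = "\<lambda>m::mono. {p::mono\<times>mono. fst p + snd p = m}"
  have "mps_mult (mps_mult f g) h m = (\<Sum>p\<in>?P m. \<Sum>q\<in>?P (fst p). f (fst q) * g (snd q) * h (snd p))"
    unfolding mps_mult_def by (simp add: sum_distrib_right)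
  also have "\<dots> = (\<Sum>(p,q)\<in>Sigma (?P m) (\<lambda>p. ?P (fst p)). f (fst q) * g (snd q) * h (snd p))"
    by (rule sum.Sigma) (auto simp: finite_pairs)
  also have "\<dots> = (\<Sum>(p,q)\<in>Sigma (?P m) (\<lambda>p. ?P (snd p)). f (fst p) * (g (fst q) * h (snd q)))"
    by (rule sum.reindex_bij_witness[of _ "\<lambda>((a,b),(c,d)). ((a+c,d),(a,c))" "\<lambda>((a,b),(c,d)). ((c,d+b),(d,b))"])
       (auto simp: add.assoc mult.assoc)
  also have "\<dots> = (\<Sum>p\<in>?P m. \<Sum>q\<in>?P (snd p). f (fst p) * (g (fst q) * h (snd q)))"
    by (rule sum.Sigma[symmetric]) (auto simp: finite_pairs)
  also have "\<dots> = mps_mult f (mps_mult g h) m"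
    unfolding mps_mult_def by (simp add: sum_distrib_left)
  finally show "mps_mult (mps_mult f g) h m = mps_mult f (mps_mult g h) m" .
qed

definition deg :: "mono \<Rightarrow> nat" where "deg m = (\<Sum>w\<in>ks m. lk m w)"

lemma deg_superset: "finite K \<Longrightarrow> ks m \<subseteq> K \<Longrightarrow> deg m = (\<Sum>w\<in>K. lk m w)"
  unfolding deg_def by (rule sum.mono_neutral_left) (auto simp: in_keys_iff)

lemma deg_add: "deg (a + b) = deg a + deg b"
proof -
  have K: "finite (ks a \<union> ks b)" by simp
  have "deg (a+b) = (\<Sum>w\<in>ks a \<union> ks b. lk (a+b) w)"
    using keys_add[of a b] by (intro deg_superset) auto
  also have "\<dots> = (\<Sum>w\<in>ks a \<union> ks b. lk a w) + (\<Sum>w\<in>ks a \<union> ks b. lk b w)"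
    by (simp add: Poly_Mapping.lookup_add sum.distrib)
  also have "\<dots> = deg a + deg b" using deg_superset[OF K, of a] deg_superset[OF K, of b] by auto
  finally show ?thesis .
qed

lemma lk_le_deg: "lk m w \<le> deg m"
proof (cases "w \<in> ks m")
  case True then show ?thesis unfolding deg_def by (intro member_le_sum) auto
next
  case False then show ?thesis by (simp add: in_keys_iff)
qed

lemma deg_pair_le: "fst p + snd p = m \<Longrightarrow> deg (fst p) \<le> deg m \<and> deg (snd p) \<le> deg m"
  using deg_add[of "fst p" "snd p"] by auto

lemma mps_sum_eval:
  assumes "finite S" "S \<subseteq> I" "\<And>i. i \<in> I \<Longrightarrow> i \<notin> S \<Longrightarrow> F i m = 0"
  shows "mps_sum F I m = (\<Sum>i\<in>S. F i m)"
  unfolding mps_sum_def using assms by (intro sum.mono_neutral_left) auto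

definition LF :: "('i \<Rightarrow> mps) \<Rightarrow> 'i set \<Rightarrow> ('i \<Rightarrow> nat) \<Rightarrow> bool" where
  "LF F I d \<longleftrightarrow> (\<forall>i\<in>I. \<forall>m. F i m \<noteq> 0 \<longrightarrow> d i \<le> deg m) \<and> (\<forall>D. finite {i\<in>I. d i \<le> D})"

lemma LF_eval:
  assumes "LF F I d" "deg m \<le> D"
  shows "mps_sum F I m = (\<Sum>i\<in>{i\<in>I. d i \<le> D}. F i m)"
  using assms unfolding LF_def by (intro mps_sum_eval) force+

lemma LF_mult:
  assumes "LF F I d" shows "LF (\<lambda>i. mps_mult f (F i)) I d"
  unfolding LF_def
proof (intro conjI ballI allI impI)
  fix i m assume i: "i \<in> I" and nz: "mps_mult f (F i) m \<noteq> 0"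
  then obtain p where p: "fst p + snd p = m" "F i (snd p) \<noteq> 0"
    unfolding mps_mult_def by (metis (mono_tags, lifting) mem_Collect_eq mult_zero_right sum.neutral)
  then have "d i \<le> deg (snd p)" using assms i unfolding LF_def by blast
  then show "d i \<le> deg m" using deg_pair_le[OF p(1)] by linarith
next
  fix D show "finite {i\<in>I. d i \<le> D}" using assms unfolding LF_def by blast
qed

lemma mult_sum_right:
  assumes "LF F I d"
  shows "mps_mult f (mps_sum F I) = mps_sum (\<lambda>i. mps_mult f (F i)) I"
proof
  fix m
  let ?J = "{i\<in>I. d i \<le> deg m}"
  let ?P = "{p::mono\<times>mono. fst p + snd p = m}"
  have "mps_mult f (mps_sum F I) m = (\<Sum>p\<in>?P. f (fst p) * (\<Sum>i\<in>?J. F i (snd p)))"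
    unfolding mps_mult_def
  proof (rule sum.cong)
    fix p assume "p \<in> ?P"
    then have "deg (snd p) \<le> deg m" using deg_pair_le by auto
    then show "f (fst p) * mps_sum F I (snd p) = f (fst p) * (\<Sum>i\<in>?J. F i (snd p))"
      using LF_eval[OF assms] by simp
  qed simp
  also have "\<dots> = (\<Sum>i\<in>?J. \<Sum>p\<in>?P. f (fst p) * F i (snd p))"
    by (simp add: sum_distrib_left sum.swap[of _ ?P])
  also have "\<dots> = mps_sum (\<lambda>i. mps_mult f (F i)) I m"
    using LF_eval[OF LF_mult[OF assms, of f], of m "deg m"] by (simp add: mps_mult_def)
  finally show "mps_mult f (mps_sum F I) m = mps_sum (\<lambda>i. mps_mult f (F i)) I m" .
qed

lemma LF_inner:
  assumes "LF (\<lambda>(i,j). G i j) (Sigma I J) d" "i \<in> I"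
  shows "LF (G i) (J i) (\<lambda>j. d (i,j))"
  unfolding LF_def
proof (intro conjI ballI allI impI)
  fix j m assume "j \<in> J i" "G i j m \<noteq> 0"
  then show "d (i,j) \<le> deg m" using assms unfolding LF_def by fastforce
next
  fix D
  have "{j\<in>J i. d (i,j) \<le> D} \<subseteq> snd ` {x\<in>Sigma I J. d x \<le> D}" using assms(2) by force
  then show "finite {j\<in>J i. d (i,j) \<le> D}" using assms(1) unfolding LF_def by (meson finite_imageI finite_subset)
qed

lemma sum_Sigma:
  assumes lf: "LF (\<lambda>(i,j). G i j) (Sigma I J) d"
  shows "mps_sum (\<lambda>i. mps_sum (G i) (J i)) I = mps_sum (\<lambda>(i,j). G i j) (Sigma I J)"
proof
  fix m
  let ?T = "{x\<in>Sigma I J. d x \<le> deg m}"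
  let ?S = "fst ` ?T"
  have fT: "finite ?T" using lf unfolding LF_def by blast
  have inner: "mps_sum (G i) (J i) m = (\<Sum>j\<in>{j\<in>J i. d (i,j) \<le> deg m}. G i j m)" if "i \<in> I" for i
    using LF_eval[OF LF_inner[OF lf that], of m "deg m"] by simp
  have "mps_sum (\<lambda>i. mps_sum (G i) (J i)) I m = (\<Sum>i\<in>?S. mps_sum (G i) (J i) m)"
  proof (rule mps_sum_eval)
    fix i assume "i \<in> I" "i \<notin> ?S"
    then have e: "{j\<in>J i. d (i,j) \<le> deg m} = {}" by force
    have "(\<Sum>j\<in>{j\<in>J i. d (i,j) \<le> deg m}. G i j m) = 0" by (simp only: e sum.empty)
    then show "mps_sum (G i) (J i) m = 0" using inner[OF \<open>i \<in> I\<close>] by simp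
  qed (use fT in auto)
  also have "\<dots> = (\<Sum>i\<in>?S. \<Sum>j\<in>{j\<in>J i. d (i,j) \<le> deg m}. G i j m)"
    by (rule sum.cong) (auto simp: inner)
  also have "\<dots> = (\<Sum>(i,j)\<in>Sigma ?S (\<lambda>i. {j\<in>J i. d (i,j) \<le> deg m}). G i j m)"
    by (rule sum.Sigma) (use fT LF_inner[OF lf] in \<open>auto simp: LF_def\<close>)
  also have "Sigma ?S (\<lambda>i. {j\<in>J i. d (i,j) \<le> deg m}) = ?T" by force
  also have "(\<Sum>(i,j)\<in>?T. G i j m) = mps_sum (\<lambda>(i,j). G i j) (Sigma I J) m"
    using LF_eval[OF lf, of m "deg m"] by (simp add: case_prod_beta)
  finally show "mps_sum (\<lambda>i. mps_sum (G i) (J i)) I m = mps_sum (\<lambda>(i,j). G i j) (Sigma I J) m" .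
qed

lemma sum_reindex:
  assumes "bij_betw h J I"
  shows "mps_sum F I = mps_sum (\<lambda>j. F (h j)) J"
proof
  fix m
  let ?S = "{j\<in>J. F (h j) m \<noteq> 0}"
  have inj: "inj_on h ?S" using assms unfolding bij_betw_def by (auto intro: inj_on_subset)
  have img: "h ` ?S = {i\<in>I. F i m \<noteq> 0}" using assms unfolding bij_betw_def by force
  show "mps_sum F I m = mps_sum (\<lambda>j. F (h j)) J m"
    unfolding mps_sum_def using sum.reindex[OF inj, of "\<lambda>i. F i m"] img by simp
qed

lemma LF_reindex:
  assumes "bij_betw h J I" "LF F I d"
  shows "LF (\<lambda>j. F (h j)) J (\<lambda>j. d (h j))"
  unfolding LF_def
proof (intro conjI ballI allI impI)
  fix j m assume "j \<in> J" "F (h j) m \<noteq> 0"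
  then show "d (h j) \<le> deg m" using assms unfolding LF_def bij_betw_def by blast
next
  fix D
  have inj: "inj_on h {j\<in>J. d (h j) \<le> D}" using assms unfolding bij_betw_def by (auto intro: inj_on_subset)
  have "h ` {j\<in>J. d (h j) \<le> D} \<subseteq> {i\<in>I. d i \<le> D}" using assms unfolding bij_betw_def by auto
  then have "finite (h ` {j\<in>J. d (h j) \<le> D})" using assms(2) unfolding LF_def by (meson finite_subset)
  then show "finite {j\<in>J. d (h j) \<le> D}" using inj by (rule finite_imageD)
qed

lemma mult_nz_pair:
  assumes "mps_mult f g m \<noteq> 0"
  obtains a b where "a + b = m" "f a \<noteq> 0" "g b \<noteq> 0"
proof -
  from assms obtain p where "p \<in> {p. fst p + snd p = m}" "f (fst p) * g (snd p) \<noteq> 0"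
    unfolding mps_mult_def by (meson sum.not_neutral_contains_not_neutral)
  then show ?thesis using that by auto
qed

lemma LF_prod:
  assumes "LF F I d" "LF F' I' d'"
  shows "LF (\<lambda>(i,i'). mps_mult (F i) (F' i')) (I \<times> I') (\<lambda>(i,i'). d i + d' i')"
  unfolding LF_def
proof (intro conjI ballI allI impI)
  fix x m assume x: "x \<in> I \<times> I'" and nz: "(case x of (i,i') \<Rightarrow> mps_mult (F i) (F' i')) m \<noteq> 0"
  obtain i i' where xi: "x = (i,i')" by force
  from nz xi obtain a b where ab: "a + b = m" "F i a \<noteq> 0" "F' i' b \<noteq> 0" by (auto elim: mult_nz_pair)
  have "d i \<le> deg a" "d' i' \<le> deg b" using ab x xi assms unfolding LF_def by auto
  then show "(case x of (i,i') \<Rightarrow> d i + d' i') \<le> deg m" using deg_add[of a b] ab xi by simp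
next
  fix D
  have "{x\<in>I \<times> I'. (case x of (i,i') \<Rightarrow> d i + d' i') \<le> D} \<subseteq> {i\<in>I. d i \<le> D} \<times> {i\<in>I'. d' i \<le> D}" by auto
  then show "finite {x\<in>I \<times> I'. (case x of (i,i') \<Rightarrow> d i + d' i') \<le> D}"
    using assms unfolding LF_def by (meson finite_SigmaI finite_subset)
qed

lemma mult_sums:
  assumes lf: "LF F I d" and lf': "LF F' I' d'"
  shows "mps_mult (mps_sum F I) (mps_sum F' I') = mps_sum (\<lambda>(i,i'). mps_mult (F i) (F' i')) (I \<times> I')"
proof
  fix m
  let ?J = "{i\<in>I. d i \<le> deg m}" and ?J' = "{i\<in>I'. d' i \<le> deg m}"
  let ?P = "{p::mono\<times>mono. fst p + snd p = m}"
  have fJ: "finite ?J" "finite ?J'" using lf lf' unfolding LF_def by auto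
  have "mps_mult (mps_sum F I) (mps_sum F' I') m = (\<Sum>p\<in>?P. (\<Sum>i\<in>?J. F i (fst p)) * (\<Sum>i\<in>?J'. F' i (snd p)))"
    unfolding mps_mult_def
  proof (rule sum.cong)
    fix p assume "p \<in> ?P"
    then have "deg (fst p) \<le> deg m" "deg (snd p) \<le> deg m" using deg_pair_le by auto
    then show "mps_sum F I (fst p) * mps_sum F' I' (snd p) = (\<Sum>i\<in>?J. F i (fst p)) * (\<Sum>i\<in>?J'. F' i (snd p))"
      using LF_eval[OF lf] LF_eval[OF lf'] by simp
  qed simp
  also have "\<dots> = (\<Sum>i\<in>?J. \<Sum>i'\<in>?J'. \<Sum>p\<in>?P. F i (fst p) * F' i' (snd p))"
    by (simp add: sum_product sum.swap[of _ ?P])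
  also have "\<dots> = (\<Sum>i\<in>?J. \<Sum>i'\<in>?J'. mps_mult (F i) (F' i') m)"
    by (simp add: mps_mult_def)
  also have "\<dots> = (\<Sum>(i,i')\<in>?J \<times> ?J'. mps_mult (F i) (F' i') m)"
    by (rule sum.cartesian_product)
  also have "\<dots> = (\<Sum>x\<in>?J \<times> ?J'. (\<lambda>(i,i'). mps_mult (F i) (F' i')) x m)"
    by (rule sum.cong) auto
  also have "\<dots> = mps_sum (\<lambda>(i,i'). mps_mult (F i) (F' i')) (I \<times> I') m"
  proof (rule mps_sum_eval[symmetric])
    fix x assume x: "x \<in> I \<times> I'" "x \<notin> ?J \<times> ?J'"
    show "(case x of (i,i') \<Rightarrow> mps_mult (F i) (F' i')) m = 0"
    proof (rule ccontr)
      assume "(case x of (i,i') \<Rightarrow> mps_mult (F i) (F' i')) m \<noteq> 0"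
      then have "(case x of (i,i') \<Rightarrow> d i + d' i') \<le> deg m" using LF_prod[OF lf lf'] x(1) unfolding LF_def by blast
      then show False using x by auto
    qed
  qed (use fJ in \<open>auto simp: case_prod_beta\<close>)
  finally show "mps_mult (mps_sum F I) (mps_sum F' I') m = mps_sum (\<lambda>(i,i'). mps_mult (F i) (F' i')) (I \<times> I') m" .
qed

definition pf :: "(var \<Rightarrow> nat \<Rightarrow> rat) \<Rightarrow> mps" where
  "pf \<phi> m = (\<Prod>w\<in>insert Q (ks m). \<phi> w (lk m w))"

definition normal :: "(var \<Rightarrow> nat \<Rightarrow> rat) \<Rightarrow> bool" where
  "normal \<phi> \<longleftrightarrow> (\<forall>w. w \<noteq> Q \<longrightarrow> \<phi> w 0 = 1)"

lemma pf_superset: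
  assumes "normal \<phi>" "finite K" "insert Q (ks m) \<subseteq> K"
  shows "pf \<phi> m = (\<Prod>w\<in>K. \<phi> w (lk m w))"
  unfolding pf_def using assms
  by (intro prod.mono_neutral_left) (auto simp: normal_def in_keys_iff)

definition conv :: "(var \<Rightarrow> nat \<Rightarrow> rat) \<Rightarrow> (var \<Rightarrow> nat \<Rightarrow> rat) \<Rightarrow> var \<Rightarrow> nat \<Rightarrow> rat" where
  "conv \<phi> \<psi> w k = (\<Sum>i\<le>k. \<phi> w i * \<psi> w (k - i))"

lemma normal_conv: "normal \<phi> \<Longrightarrow> normal \<psi> \<Longrightarrow> normal (conv \<phi> \<psi>)"
  by (simp add: normal_def conv_def)

lemma pf_mult:
  assumes n1: "normal \<phi>" and n2: "normal \<psi>"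
  shows "mps_mult (pf \<phi>) (pf \<psi>) = pf (conv \<phi> \<psi>)"
proof
  fix m :: mono
  define K where "K = insert Q (ks m)"
  have fK: "finite K" unfolding K_def by simp
  let ?P = "{p::mono\<times>mono. fst p + snd p = m}"
  let ?T = "PiE K (\<lambda>w. {..lk m w})"
  define A where "A g = Abs_poly_mapping (\<lambda>w. if w \<in> K then g w else (0::nat))" for g :: "var \<Rightarrow> nat"
  have lkA: "lk (A g) = (\<lambda>w. if w \<in> K then g w else 0)" for g
    unfolding A_def by (rule lookup_Abs_poly_mapping) (rule finite_subset[OF _ fK], auto)
  have ksA: "ks (A g) \<subseteq> K" for g by (auto simp: in_keys_iff lkA split: if_splits)
  have lkm0: "w \<notin> K \<Longrightarrow> lk m w = 0" for w unfolding K_def by (simp add: in_keys_iff)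
  have keys_sub: "ks a \<subseteq> K" if "a + b = m" for a b
  proof
    fix w assume "w \<in> ks a"
    then have "lk a w \<noteq> 0" by (simp add: in_keys_iff)
    then have "lk m w \<noteq> 0" using that by (auto simp: Poly_Mapping.lookup_add)
    then show "w \<in> K" unfolding K_def by (simp add: in_keys_iff)
  qed
  have "mps_mult (pf \<phi>) (pf \<psi>) m = (\<Sum>p\<in>?P. \<Prod>w\<in>K. \<phi> w (lk (fst p) w) * \<psi> w (lk (snd p) w))"
    unfolding mps_mult_def
  proof (rule sum.cong)
    fix p assume p: "p \<in> ?P"
    have "ks (snd p) \<subseteq> K" using keys_sub[of "snd p" "fst p"] p by (simp add: add.commute)
    then show "pf \<phi> (fst p) * pf \<psi> (snd p) = (\<Prod>w\<in>K. \<phi> w (lk (fst p) w) * \<psi> w (lk (snd p) w))"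
      using p keys_sub[of "fst p" "snd p"] pf_superset[OF n1 fK, of "fst p"] pf_superset[OF n2 fK, of "snd p"]
      by (simp add: prod.distrib K_def)
  qed simp
  also have "\<dots> = (\<Sum>g\<in>?T. \<Prod>w\<in>K. \<phi> w (g w) * \<psi> w (lk m w - g w))"
  proof (rule sum.reindex_bij_witness[of _ "\<lambda>g. (A g, m - A g)" "\<lambda>p. restrict (lk (fst p)) K"])
    fix g assume g: "g \<in> ?T"
    then have le: "\<And>w. w \<in> K \<Longrightarrow> g w \<le> lk m w" by auto
    show "restrict (lk (fst (A g, m - A g))) K = g"
      using g by (auto simp: lkA restrict_def PiE_def extensional_def fun_eq_iff)
    have "A g + (m - A g) = m"
      by (rule poly_mapping_eqI) (auto simp: Poly_Mapping.lookup_add lookup_minus lkA le lkm0)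
    then show "(A g, m - A g) \<in> ?P" by simp
  next
    fix p assume p: "p \<in> ?P"
    have ksp: "ks (fst p) \<subseteq> K" using keys_sub[of "fst p" "snd p"] p by simp
    have "A (restrict (lk (fst p)) K) = fst p"
      by (rule poly_mapping_eqI) (use ksp in \<open>auto simp: lkA in_keys_iff\<close>)
    moreover have "m - fst p = snd p" using p by auto
    ultimately show "(A (restrict (lk (fst p)) K), m - A (restrict (lk (fst p)) K)) = p" by (simp add: prod_eq_iff)
    show "restrict (lk (fst p)) K \<in> ?T" using p by (auto simp: Poly_Mapping.lookup_add)
    show "(\<Prod>w\<in>K. \<phi> w (restrict (lk (fst p)) K w) * \<psi> w (lk m w - restrict (lk (fst p)) K w)) =
          (\<Prod>w\<in>K. \<phi> w (lk (fst p) w) * \<psi> w (lk (snd p) w))"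
      by (rule prod.cong) (use p in \<open>auto simp: Poly_Mapping.lookup_add\<close>)
  qed
  also have "\<dots> = (\<Prod>w\<in>K. \<Sum>i\<le>lk m w. \<phi> w i * \<psi> w (lk m w - i))"
    by (rule prod_sum_PiE[symmetric]) (auto simp: fK)
  also have "\<dots> = pf (conv \<phi> \<psi>) m" unfolding pf_def K_def conv_def by simp
  finally show "mps_mult (pf \<phi>) (pf \<psi>) m = pf (conv \<phi> \<psi>) m" .
qed

definition g\<phi> :: "nat \<Rightarrow> (var \<Rightarrow> rat) \<Rightarrow> var \<Rightarrow> nat \<Rightarrow> rat" where
  "g\<phi> N la w k = (if w = Q then (if k = N then 1 else 0) else (la w)^k / fact k)"

definition G :: "nat \<Rightarrow> (var \<Rightarrow> rat) \<Rightarrow> mps" where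
  "G N la = pf (g\<phi> N la)"

lemma normal_g\<phi>: "normal (g\<phi> N la)" by (simp add: normal_def g\<phi>_def)

lemma G_explicit: "G N la m = (if lk m Q = N then (\<Prod>w\<in>ks m - {Q}. (la w)^(lk m w) / fact (lk m w)) else 0)"
proof -
  have "G N la m = g\<phi> N la Q (lk m Q) * (\<Prod>w\<in>ks m - {Q}. g\<phi> N la w (lk m w))"
    unfolding G_def pf_def by (subst insert_Diff_single[symmetric], subst prod.insert) auto
  also have "(\<Prod>w\<in>ks m - {Q}. g\<phi> N la w (lk m w)) = (\<Prod>w\<in>ks m - {Q}. (la w)^(lk m w) / fact (lk m w))"
    by (rule prod.cong) (auto simp: g\<phi>_def)
  finally show ?thesis by (simp add: g\<phi>_def)
qed

lemma G_nz: "G N la m \<noteq> 0 \<Longrightarrow> lk m Q = N"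
  by (simp add: G_explicit split: if_splits)

lemma conv_g\<phi>: "conv (g\<phi> N la) (g\<phi> N' mu) = g\<phi> (N + N') (\<lambda>w. la w + mu w)"
proof (intro ext)
  fix w k
  show "conv (g\<phi> N la) (g\<phi> N' mu) w k = g\<phi> (N + N') (\<lambda>w. la w + mu w) w k"
  proof (cases "w = Q")
    case True
    have "conv (g\<phi> N la) (g\<phi> N' mu) w k = (\<Sum>i\<le>k. if i = N \<and> k - i = N' then 1 else 0)"
      unfolding conv_def g\<phi>_def using True by (intro sum.cong) auto
    also have "\<dots> = (if k = N + N' then 1 else 0)"
    proof (cases "N \<le> k")
      case True
      have "(\<Sum>i\<le>k. if i = N \<and> k - i = N' then 1 else 0) = (\<Sum>i\<le>k. if i = N then (if k - N = N' then 1 else 0) else (0::rat))"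
        by (rule sum.cong) auto
      also have "\<dots> = (if k - N = N' then 1 else 0)" using True by (simp add: sum.delta)
      finally show ?thesis using True by auto
    next
      case False
      then show ?thesis by (auto intro!: sum.neutral)
    qed
    finally show ?thesis using True by (simp add: g\<phi>_def)
  next
    case False
    have "conv (g\<phi> N la) (g\<phi> N' mu) w k = (\<Sum>i\<le>k. (la w)^i / fact i * ((mu w)^(k-i) / fact (k-i)))"
      unfolding conv_def g\<phi>_def using False by simp
    also have "\<dots> = (\<Sum>i\<le>k. of_nat (k choose i) * (la w)^i * (mu w)^(k-i)) / fact k"
      by (simp add: sum_divide_distrib binomial_fact field_simps)
    also have "\<dots> = (la w + mu w)^k / fact k" by (simp add: binomial_ring)
    finally show ?thesis using False by (simp add: g\<phi>_def)
  qed
qed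

lemma G_mult: "mps_mult (G N la) (G N' mu) = G (N + N') (\<lambda>w. la w + mu w)"
  unfolding G_def by (simp add: pf_mult normal_g\<phi> conv_g\<phi>)

lemma G_one: "mps_const 1 = G 0 (\<lambda>_. 0)"
proof
  fix m :: mono
  show "mps_const 1 m = G 0 (\<lambda>_. 0) m"
  proof (cases "m = 0")
    case True then show ?thesis by (simp add: mps_const_def G_explicit)
  next
    case False
    then obtain w where w: "w \<in> ks m" by (metis all_not_in_conv keys_eq_empty)
    show ?thesis
    proof (cases "w = Q")
      case True then show ?thesis using w False by (auto simp: mps_const_def G_explicit in_keys_iff)
    next
      case wQ: False
      then have "(\<Prod>w\<in>ks m - {Q}. (0::rat)^(lk m w) / fact (lk m w)) = 0"
        using w by (intro prod_zero) (auto simp: in_keys_iff intro!: bexI[of _ w])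
      then show ?thesis using False by (simp add: mps_const_def G_explicit)
    qed
  qed
qed

lemma G_varQ: "mps_var Q = G 1 (\<lambda>_. 0)"
proof
  fix m :: mono
  show "mps_var Q m = G 1 (\<lambda>_. 0) m"
  proof (cases "ks m - {Q} = {}")
    case True
    then have "m = Poly_Mapping.single Q (lk m Q)"
      by (intro poly_mapping_eqI) (auto simp: lookup_single in_keys_iff when_def)
    then show ?thesis using True
      by (auto simp: mps_var_def G_explicit)
  next
    case False
    then obtain w where w: "w \<in> ks m" "w \<noteq> Q" by blast
    then have "m \<noteq> Poly_Mapping.single Q 1" by auto
    moreover have "(\<Prod>w\<in>ks m - {Q}. (0::rat)^(lk m w) / fact (lk m w)) = 0"
      using w by (intro prod_zero) (auto simp: in_keys_iff intro!: bexI[of _ w])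
    ultimately show ?thesis by (simp add: mps_var_def G_explicit)
  qed
qed

lemma power_G: "mps_power (G N la) k = G (k * N) (\<lambda>w. of_nat k * la w)"
proof (induction k)
  case 0 then show ?case by (simp add: mps_power_def G_one)
next
  case (Suc k)
  have "mps_power (G N la) (Suc k) = mps_mult (G N la) (mps_power (G N la) k)"
    by (simp add: mps_power_def)
  also have "\<dots> = G (Suc k * N) (\<lambda>w. of_nat (Suc k) * la w)"
    by (simp add: Suc G_mult algebra_simps)
  finally show ?case .
qed

definition lin :: "(var \<Rightarrow> rat) \<Rightarrow> mps" where
  "lin la m = (if lk m Q = 0 \<and> deg m = 1 then (\<Sum>w\<in>ks m. la w) else 0)"

lemma deg_single: "deg (Poly_Mapping.single w k) = k"
  by (cases "k = 0") (auto simp: deg_def)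

lemma deg1: assumes "deg m = 1" shows "\<exists>w. m = Poly_Mapping.single w 1"
proof -
  have "ks m \<noteq> {}" using assms by (auto simp: deg_def)
  then obtain w where w: "w \<in> ks m" by blast
  have "deg m = lk m w + (\<Sum>x\<in>ks m - {w}. lk m x)"
    unfolding deg_def using w by (simp add: sum.remove)
  moreover have "lk m w \<ge> 1" using w by (simp add: in_keys_iff)
  ultimately have 1: "lk m w = 1" and 2: "(\<Sum>x\<in>ks m - {w}. lk m x) = 0" using assms by linarith+
  have "\<forall>x\<in>ks m - {w}. lk m x = 0" using 2 by simp
  then have "m = Poly_Mapping.single w 1"
    by (intro poly_mapping_eqI) (auto simp: lookup_single when_def 1 in_keys_iff)
  then show ?thesis ..
qed

lemma lin_single: "w \<noteq> Q \<Longrightarrow> lin la (Poly_Mapping.single w 1) = la w"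
  by (simp add: lin_def deg_single lookup_single)

lemma lin_single': "w \<noteq> Q \<Longrightarrow> lin la (Poly_Mapping.single w (Suc 0)) = la w"
  using lin_single[of w la] by simp

lemma lin_nz: assumes "lin la a \<noteq> 0" shows "\<exists>w. w \<noteq> Q \<and> a = Poly_Mapping.single w 1"
proof -
  have a: "lk a Q = 0" "deg a = 1" using assms by (auto simp: lin_def split: if_splits)
  obtain w where w: "a = Poly_Mapping.single w 1" using deg1[OF a(2)] by blast
  have "w \<noteq> Q" using a(1) w by (auto simp: lookup_single)
  then show ?thesis using w by blast
qed

definition H :: "nat \<Rightarrow> (var \<Rightarrow> rat) \<Rightarrow> mps" where
  "H k la m = (if lk m Q = 0 \<and> deg m = k then fact k * (\<Prod>w\<in>ks m. la w ^ lk m w / fact (lk m w)) else 0)"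

lemma H_step: "mps_mult (lin la) (H k la) = H (Suc k) la"
proof
  fix m :: mono
  let ?P = "{p::mono\<times>mono. fst p + snd p = m}"
  let ?W = "ks m - {Q}"
  let ?e = "\<lambda>w. Poly_Mapping.single w (1::nat)"
  let ?j = "\<lambda>w. (?e w, m - ?e w)"
  have mem: "?j w \<in> ?P" if "w \<in> ?W" for w
  proof -
    have "?e w + (m - ?e w) = m" using that
      by (intro poly_mapping_eqI) (auto simp: Poly_Mapping.lookup_add lookup_minus lookup_single when_def in_keys_iff)
    then show ?thesis by simp
  qed
  have "(\<Sum>p\<in>?P. lin la (fst p) * H k la (snd p)) = (\<Sum>p\<in>?j ` ?W. lin la (fst p) * H k la (snd p))"
  proof (rule sum.mono_neutral_right)
    show "finite ?P" by (rule finite_pairs)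
    show "?j ` ?W \<subseteq> ?P" using mem by auto
    show "\<forall>p\<in>?P - ?j ` ?W. lin la (fst p) * H k la (snd p) = 0"
    proof
      fix p assume p: "p \<in> ?P - ?j ` ?W"
      show "lin la (fst p) * H k la (snd p) = 0"
      proof (rule ccontr)
        assume "lin la (fst p) * H k la (snd p) \<noteq> 0"
        then have "lin la (fst p) \<noteq> 0" by auto
        then obtain w where w: "w \<noteq> Q" "fst p = ?e w" using lin_nz by blast
        have "lk m w \<ge> 1" using p w by (auto simp: Poly_Mapping.lookup_add)
        then have "w \<in> ?W" using w by (auto simp: in_keys_iff)
        moreover have "snd p = m - ?e w" using p w by auto
        ultimately have "p = ?j w" "w \<in> ?W" using w by (auto simp: prod_eq_iff)
        then have "p \<in> ?j ` ?W" by blast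
        then show False using p by blast
      qed
    qed
  qed
  then have "mps_mult (lin la) (H k la) m = (\<Sum>p\<in>?j ` ?W. lin la (fst p) * H k la (snd p))"
    by (simp add: mps_mult_def)
  also have "\<dots> = (\<Sum>w\<in>?W. la w * H k la (m - ?e w))"
  proof (subst sum.reindex)
    show "inj_on ?j ?W"
    proof (rule inj_onI)
      fix x y assume "?j x = ?j y"
      then have "lk (?e x) x = lk (?e y) x" by simp
      then show "x = y" by (auto simp: lookup_single when_def split: if_splits)
    qed
    show "sum ((\<lambda>p. lin la (fst p) * H k la (snd p)) \<circ> ?j) ?W = (\<Sum>w\<in>?W. la w * H k la (m - ?e w))"
      by (rule sum.cong) (simp_all add: lin_single lin_single')
  qed
  also have "\<dots> = H (Suc k) la m"
  proof (cases "lk m Q = 0 \<and> deg m = Suc k")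
    case False
    have "H k la (m - ?e w) = 0" if w: "w \<in> ?W" for w
    proof -
      have "m = (m - ?e w) + ?e w" using mem[OF w] by (simp add: add.commute)
      then have dm: "deg m = deg (m - ?e w) + 1" using deg_add[of "m - ?e w" "?e w"] by (simp add: deg_single)
      have "lk (m - ?e w) Q = lk m Q" using w by (simp add: lookup_minus lookup_single)
      then show ?thesis using False dm by (auto simp: H_def)
    qed
    then have "(\<Sum>w\<in>?W. la w * H k la (m - ?e w)) = 0" by simp
    moreover have "H (Suc k) la m = 0" using False unfolding H_def by auto
    ultimately show ?thesis by simp
  next
    case True
    then have Qn: "Q \<notin> ks m" by (simp add: in_keys_iff)
    then have W: "?W = ks m" by auto
    define f where "f w n = la w ^ n / fact n" for w n
    have key: "la w * H k la (m - ?e w) = of_nat (lk m w) * (fact k * (\<Prod>x\<in>ks m. f x (lk m x)))"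
      if w: "w \<in> ks m" for w
    proof -
      have "m = (m - ?e w) + ?e w" using mem[of w] w W by (simp add: add.commute)
      then have dm: "deg m = deg (m - ?e w) + 1" using deg_add[of "m - ?e w" "?e w"] by (simp add: deg_single)
      have lQ: "lk (m - ?e w) Q = 0" using True w Qn by (auto simp: lookup_minus lookup_single)
      have ksub: "ks (m - ?e w) \<subseteq> ks m" by (auto simp: in_keys_iff lookup_minus)
      have "(\<Prod>x\<in>ks (m - ?e w). f x (lk (m - ?e w) x)) = (\<Prod>x\<in>ks m. f x (lk (m - ?e w) x))"
        using ksub by (intro prod.mono_neutral_left) (auto simp: f_def in_keys_iff)
      also have "\<dots> = f w (lk m w - 1) * (\<Prod>x\<in>ks m - {w}. f x (lk m x))"
      proof -
        have "(\<Prod>x\<in>ks m - {w}. f x (lk (m - ?e w) x)) = (\<Prod>x\<in>ks m - {w}. f x (lk m x))"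
          by (rule prod.cong) (auto simp: lookup_minus lookup_single)
        then show ?thesis using w by (simp add: prod.remove lookup_minus lookup_single)
      qed
      finally have pe: "(\<Prod>x\<in>ks (m - ?e w). f x (lk (m - ?e w) x)) = f w (lk m w - 1) * (\<Prod>x\<in>ks m - {w}. f x (lk m x))" .
      have lw: "lk m w \<ge> 1" using w by (simp add: in_keys_iff)
      have fw: "la w * f w (lk m w - 1) = of_nat (lk m w) * f w (lk m w)"
      proof -
        obtain n where n: "lk m w = Suc n" using lw by (cases "lk m w") auto
        have fs: "(fact (Suc n)::rat) = of_nat (Suc n) * fact n" by (rule fact_Suc)
        have nz: "(fact n :: rat) \<noteq> 0" "(of_nat (Suc n)::rat) \<noteq> 0" by auto
        show ?thesis unfolding f_def n fs using nz by (simp add: field_simps del: of_nat_Suc)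
      qed
      have "la w * H k la (m - ?e w) = fact k * ((la w * f w (lk m w - 1)) * (\<Prod>x\<in>ks m - {w}. f x (lk m x)))"
        using dm True lQ pe by (simp add: H_def f_def mult_ac)
      also have "\<dots> = of_nat (lk m w) * (fact k * (f w (lk m w) * (\<Prod>x\<in>ks m - {w}. f x (lk m x))))"
        unfolding fw by (simp add: mult_ac)
      also have "f w (lk m w) * (\<Prod>x\<in>ks m - {w}. f x (lk m x)) = (\<Prod>x\<in>ks m. f x (lk m x))"
        using w by (simp add: prod.remove)
      finally show ?thesis .
    qed
    have "(\<Sum>w\<in>?W. la w * H k la (m - ?e w)) = (\<Sum>w\<in>ks m. of_nat (lk m w) * (fact k * (\<Prod>x\<in>ks m. f x (lk m x))))"
      using W key by simp
    also have "\<dots> = of_nat (deg m) * (fact k * (\<Prod>x\<in>ks m. f x (lk m x)))"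
      by (simp add: deg_def sum_distrib_right)
    also have "\<dots> = H (Suc k) la m" using True by (simp add: H_def f_def)
    finally show ?thesis .
  qed
  finally show "mps_mult (lin la) (H k la) m = H (Suc k) la m" .
qed

lemma power_lin: "mps_power (lin la) k = H k la"
proof (induction k)
  case 0
  show ?case
  proof
    fix m :: mono
    show "mps_power (lin la) 0 m = H 0 la m"
      by (cases "m = 0") (auto simp: mps_power_def mps_const_def H_def deg_def in_keys_iff poly_mapping_eq_iff fun_eq_iff)
  qed
next
  case (Suc k) then show ?case by (simp add: mps_power_def H_step)
qed

lemma mps_sum_cong: "(\<And>i. i \<in> I \<Longrightarrow> F i = F' i) \<Longrightarrow> mps_sum F I = mps_sum F' I"
  unfolding mps_sum_def by (rule ext, rule sum.cong) auto

lemma mps_sum_single: "mps_sum F {i} = F i"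
proof
  fix m
  have "{i'\<in>{i}. F i' m \<noteq> 0} = (if F i m = 0 then {} else {i})" by auto
  then show "mps_sum F {i} m = F i m" unfolding mps_sum_def by simp
qed

lemma smult_lin: "mps_smult c (lin la) = lin (\<lambda>w. c * la w)"
  by (auto simp: mps_smult_def lin_def fun_eq_iff sum_distrib_left)

lemma exp_lin: "mps_exp (lin la) = G 0 la"
proof
  fix m :: mono
  have "mps_exp (lin la) m = (\<Sum>k\<in>{deg m}. mps_smult (1 / fact k) (mps_power (lin la) k) m)"
    unfolding mps_exp_def
    by (rule mps_sum_eval) (auto simp: power_lin H_def mps_smult_def)
  also have "\<dots> = G 0 la m"
  proof (cases "lk m Q = 0")
    case True
    then have "ks m - {Q} = ks m" by (auto simp: in_keys_iff)
    then show ?thesis using True by (simp add: power_lin H_def mps_smult_def G_explicit)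
  next
    case False then show ?thesis by (simp add: power_lin H_def mps_smult_def G_explicit)
  qed
  finally show "mps_exp (lin la) m = G 0 la m" .
qed

lemma En_lin: "En n (lin la) = G 0 (\<lambda>w. of_nat n * la w)"
  by (simp add: En_def smult_lin exp_lin)

lemma LF_G:
  assumes "\<And>D. finite {i\<in>I. n i \<le> D}"
  shows "LF (\<lambda>i. G (n i) (l i)) I n"
  unfolding LF_def using assms G_nz lk_le_deg by metis

lemma LF_G_mult: "1 \<le> n \<Longrightarrow> LF (\<lambda>k. G (f k * n) (l k)) UNIV (\<lambda>k. f k * n)" if "\<And>k. k \<le> f k"
proof -
  assume n: "1 \<le> n"
  show ?thesis
  proof (rule LF_G)
    fix D
    have "{i\<in>UNIV. f i * n \<le> D} \<subseteq> {..D}"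
    proof
      fix i assume "i \<in> {i\<in>UNIV. f i * n \<le> D}"
      then have "f i * n \<le> D" by simp
      moreover have "i \<le> f i * n" using that[of i] n by (metis le_trans mult_le_mono2 nat_mult_1_right)
      ultimately show "i \<in> {..D}" by simp
    qed
    then show "finite {i\<in>UNIV. f i * n \<le> D}" by (rule finite_subset) simp
  qed
qed

lemma Ln_lin:
  assumes n: "1 \<le> n"
  shows "Ln n (lin la) = mps_sum (\<lambda>k. G (Suc k * n) (\<lambda>w. of_nat (Suc k) * la w)) UNIV"
proof -
  define W where "W = mps_mult (mps_exp (lin la)) (mps_power (mps_var Q) n)"
  have W: "W = G n la"
    unfolding W_def exp_lin G_varQ power_G G_mult by simp
  have "mps_sub (mps_const 1) (mps_sub (mps_const 1) W) = W"
    by (simp add: mps_sub_def fun_eq_iff)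
  then have "mps_inverse (mps_sub (mps_const 1) W) = mps_sum (\<lambda>k. mps_power W k) UNIV"
    unfolding mps_inverse_def by simp
  also have "\<dots> = mps_sum (\<lambda>k. G (k * n) (\<lambda>w. of_nat k * la w)) UNIV"
    unfolding W by (rule mps_sum_cong) (simp add: power_G)
  finally have inv: "mps_inverse (mps_sub (mps_const 1) W) = mps_sum (\<lambda>k. G (k * n) (\<lambda>w. of_nat k * la w)) UNIV" .
  have lf: "LF (\<lambda>k. G (k * n) (\<lambda>w. of_nat k * la w)) UNIV (\<lambda>k. k * n)"
    using LF_G_mult[of id n] n by simp
  have "Ln n (lin la) = mps_mult W (mps_inverse (mps_sub (mps_const 1) W))"
    unfolding Ln_def W_def Let_def by simp
  also have "\<dots> = mps_sum (\<lambda>k. mps_mult (G n la) (G (k * n) (\<lambda>w. of_nat k * la w))) UNIV"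
    by (subst inv) (simp add: mult_sum_right[OF lf] W)
  also have "\<dots> = mps_sum (\<lambda>k. G (Suc k * n) (\<lambda>w. of_nat (Suc k) * la w)) UNIV"
    by (rule mps_sum_cong) (simp add: G_mult algebra_simps)
  finally show ?thesis .
qed

lemma EL_lin:
  assumes u: "1 \<le> u"
  shows "mps_mult (En u (lin a)) (Ln u (lin b)) =
    mps_sum (\<lambda>k. G (Suc k * u) (\<lambda>w. of_nat u * a w + of_nat (Suc k) * b w)) UNIV"
proof -
  have lf: "LF (\<lambda>k. G (Suc k * u) (\<lambda>w. of_nat (Suc k) * b w)) UNIV (\<lambda>k. Suc k * u)"
    using LF_G_mult[of Suc u] u by simp
  show ?thesis
    unfolding En_lin Ln_lin[OF u] mult_sum_right[OF lf]
    by (rule mps_sum_cong) (simp add: G_mult)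
qed

definition NN :: "(nat \<Rightarrow> nat) \<Rightarrow> nat list \<Rightarrow> nat list \<Rightarrow> nat" where
  "NN U js vs = (\<Sum>i<length js. Suc (vs!i) * U (js!i))"

definition LL :: "(nat \<Rightarrow> nat) \<Rightarrow> (nat \<Rightarrow> var \<Rightarrow> rat) \<Rightarrow> (nat \<Rightarrow> var \<Rightarrow> rat) \<Rightarrow> nat list \<Rightarrow> nat list \<Rightarrow> var \<Rightarrow> rat" where
  "LL U A B js vs w = (\<Sum>i<length js. of_nat (U (js!i)) * A (js!i) w + of_nat (Suc (vs!i)) * B (js!i) w)"

lemma LF_list:
  assumes "\<forall>j\<in>set js. 1 \<le> U j"
  shows "LF (\<lambda>vs. G (NN U js vs) (LL U A B js vs)) {vs. length vs = length js} (NN U js)"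
proof (rule LF_G)
  fix D
  have "{vs\<in>{vs. length vs = length js}. NN U js vs \<le> D} \<subseteq> {vs. set vs \<subseteq> {..D} \<and> length vs = length js}"
  proof (rule subsetI)
    fix vs assume "vs \<in> {vs\<in>{vs. length vs = length js}. NN U js vs \<le> D}"
    then have l: "length vs = length js" and N: "NN U js vs \<le> D" by auto
    have "x \<le> D" if x: "x \<in> set vs" for x
    proof -
    obtain i where i: "i < length js" "x = vs!i" using x l by (auto simp: in_set_conv_nth)
    have "1 \<le> U (js!i)" using assms i by auto
    then have "Suc (vs!i) \<le> Suc (vs!i) * U (js!i)" using mult_le_mono2[of 1 "U (js!i)" "Suc (vs!i)"] by simp
    then have "vs!i \<le> Suc (vs!i) * U (js!i)" by linarith
    also have "\<dots> \<le> NN U js vs" unfolding NN_def using i by (intro member_le_sum) auto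
    finally show "x \<le> D" using N i by simp
    qed
    then show "vs \<in> {vs. set vs \<subseteq> {..D} \<and> length vs = length js}" using l by auto
  qed
  moreover have "finite {vs. set vs \<subseteq> {..D} \<and> length vs = length js}"
    by (rule finite_lists_length_eq) simp
  ultimately show "finite {vs\<in>{vs. length vs = length js}. NN U js vs \<le> D}"
    by (rule finite_subset)
qed

lemma listprod_EL:
  assumes "\<forall>j\<in>set js. 1 \<le> U j"
  shows "mps_listprod (map (\<lambda>j. mps_sum (\<lambda>k. G (Suc k * U j) (\<lambda>w. of_nat (U j) * A j w + of_nat (Suc k) * B j w)) UNIV) js)
     = mps_sum (\<lambda>vs. G (NN U js vs) (LL U A B js vs)) {vs. length vs = length js}"
  using assms
proof (induction js)
  case Nil
  have e: "{vs::nat list. length vs = length []} = {[]}" by auto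
  have "LL U A B [] [] = (\<lambda>_. 0)" by (rule ext) (simp add: LL_def)
  then show ?case unfolding e mps_sum_single by (simp add: mps_listprod_def NN_def G_one)
next
  case (Cons j js)
  let ?F = "\<lambda>k. G (Suc k * U j) (\<lambda>w. of_nat (U j) * A j w + of_nat (Suc k) * B j w)"
  let ?F' = "\<lambda>vs. G (NN U js vs) (LL U A B js vs)"
  have u: "1 \<le> U j" using Cons.prems by simp
  have lf1: "LF ?F UNIV (\<lambda>k. Suc k * U j)" using LF_G_mult[of Suc "U j"] u by simp
  have lf2: "LF ?F' {vs. length vs = length js} (NN U js)" using LF_list Cons.prems by simp
  have "mps_listprod (map (\<lambda>j. mps_sum (\<lambda>k. G (Suc k * U j) (\<lambda>w. of_nat (U j) * A j w + of_nat (Suc k) * B j w)) UNIV) (j # js))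
      = mps_mult (mps_sum ?F UNIV) (mps_sum ?F' {vs. length vs = length js})"
    using Cons by (simp add: mps_listprod_def)
  also have "\<dots> = mps_sum (\<lambda>(k,vs). mps_mult (?F k) (?F' vs)) (UNIV \<times> {vs. length vs = length js})"
    by (rule mult_sums[OF lf1 lf2])
  also have "\<dots> = mps_sum (\<lambda>vs. (\<lambda>(k,vs). mps_mult (?F k) (?F' vs)) (hd vs, tl vs)) {vs. length vs = length (j # js)}"
  proof (rule sum_reindex)
    show "bij_betw (\<lambda>vs. (hd vs, tl vs)) {vs. length vs = length (j # js)} (UNIV \<times> {vs. length vs = length js})"
      apply (rule bij_betw_byWitness[where f'="\<lambda>(k,vs). k # vs"])
      subgoal apply clarsimp subgoal for a by (cases a) auto done
      subgoal by clarsimp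
      subgoal by clarsimp
      subgoal by clarsimp
      done
  qed
  also have "\<dots> = mps_sum (\<lambda>vs. G (NN U (j # js) vs) (LL U A B (j # js) vs)) {vs. length vs = length (j # js)}"
  proof (rule mps_sum_cong)
    fix vs :: "nat list" assume "vs \<in> {vs. length vs = length (j # js)}"
    then obtain k vs' where vs: "vs = k # vs'" "length vs' = length js" by (auto simp: length_Suc_conv)
    show "(\<lambda>(k,vs). mps_mult (?F k) (?F' vs)) (hd vs, tl vs) = G (NN U (j # js) vs) (LL U A B (j # js) vs)"
    proof -
      have 1: "NN U (j # js) (k # vs') = Suc k * U j + NN U js vs'"
        unfolding NN_def by (simp only: length_Cons sum.lessThan_Suc_shift) simp
      have 2: "LL U A B (j # js) (k # vs') = (\<lambda>w. (of_nat (U j) * A j w + of_nat (Suc k) * B j w) + LL U A B js vs' w)"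
        by (rule ext) (simp only: LL_def length_Cons sum.lessThan_Suc_shift, simp)
      show ?thesis unfolding vs 1 2 by (simp add: G_mult)
    qed
  qed
  finally show ?case .
qed

definition NF :: "nat list \<Rightarrow> nat list \<Rightarrow> nat" where
  "NF u v = (\<Sum>i<length u. u!i * v!i)"

definition LFF :: "(nat \<Rightarrow> var \<Rightarrow> rat) \<Rightarrow> (nat \<Rightarrow> var \<Rightarrow> rat) \<Rightarrow> nat list \<Rightarrow> nat list \<Rightarrow> var \<Rightarrow> rat" where
  "LFF A B u v w = (\<Sum>i<length u. of_nat (u!i) * A (Suc i) w + of_nat (v!i) * B (Suc i) w)"

definition JJ :: "nat \<Rightarrow> (nat list \<times> nat list) set" where
  "JJ l = {(u,v). u \<in> decr_tuples l \<and> length v = l \<and> (\<forall>x\<in>set v. 0 < x)}"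

lemma LF_cong: "LF F I d \<Longrightarrow> (\<And>i. i \<in> I \<Longrightarrow> F i = F' i) \<Longrightarrow> LF F' I d"
  unfolding LF_def by auto

lemma LF_JJ: "LF (\<lambda>(u,v). G (NF u v) (LFF A B u v)) (JJ l) (\<lambda>(u,v). NF u v)"
proof -
  have "LF (\<lambda>x. G (case x of (u,v) \<Rightarrow> NF u v) (case x of (u,v) \<Rightarrow> LFF A B u v)) (JJ l) (\<lambda>(u,v). NF u v)"
  proof (rule LF_G)
    fix D :: nat
    let ?B = "{xs. set xs \<subseteq> {..D} \<and> length xs = l}"
    have "{x\<in>JJ l. (case x of (u,v) \<Rightarrow> NF u v) \<le> D} \<subseteq> ?B \<times> ?B"
    proof (rule subsetI)
      fix x assume x: "x \<in> {x\<in>JJ l. (case x of (u,v) \<Rightarrow> NF u v) \<le> D}"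
      obtain u v where xuv: "x = (u,v)" by force
      have lu: "length u = l" and lv: "length v = l" and pu: "\<forall>y\<in>set u. 0 < y" and pv: "\<forall>y\<in>set v. 0 < y"
        and N: "NF u v \<le> D"
        using x xuv by (auto simp: JJ_def decr_tuples_def)
      have b: "u!i \<le> D \<and> v!i \<le> D" if i: "i < l" for i
      proof -
        have "u!i > 0" "v!i > 0" using pu pv i lu lv by auto
        then have "u!i \<le> u!i * v!i" "v!i \<le> u!i * v!i" by simp_all
        moreover have "u!i * v!i \<le> NF u v" unfolding NF_def using i lu by (intro member_le_sum) auto
        ultimately show ?thesis using N by linarith
      qed
      have "set u \<subseteq> {..D}" using b lu by (auto simp: in_set_conv_nth)
      moreover have "set v \<subseteq> {..D}" using b lv by (auto simp: in_set_conv_nth)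
      ultimately show "x \<in> ?B \<times> ?B" using xuv lu lv by auto
    qed
    moreover have "finite (?B \<times> ?B)" by (intro finite_SigmaI finite_lists_length_eq) auto
    ultimately show "finite {x\<in>JJ l. (case x of (u,v) \<Rightarrow> NF u v) \<le> D}" by (rule finite_subset)
  qed
  moreover have eq: "(\<lambda>x. G (case x of (u,v) \<Rightarrow> NF u v) (case x of (u,v) \<Rightarrow> LFF A B u v)) = (\<lambda>(u,v). G (NF u v) (LFF A B u v))"
    by (rule ext) (simp split: prod.split)
  ultimately show ?thesis by (simp only: eq)
qed

declare upt_Suc[simp del]

lemma main_family:
  "mps_sum (\<lambda>u. mps_listprod (map (\<lambda>j. mps_mult (En (u!(j-1)) (lin (A j))) (Ln (u!(j-1)) (lin (B j)))) [1..<l+1])) (decr_tuples l)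
   = mps_sum (\<lambda>(u,v). G (NF u v) (LFF A B u v)) (JJ l)"
proof -
  let ?Fam = "\<lambda>(u,v). G (NF u v) (LFF A B u v)"
  let ?S = "Sigma (decr_tuples l) (\<lambda>_. {vs::nat list. length vs = l})"
  let ?h = "\<lambda>(u, vs::nat list). (u, map Suc vs)"
  have bij: "bij_betw ?h ?S (JJ l)"
  proof (rule bij_betw_byWitness[where f'="\<lambda>(u,v). (u, map (\<lambda>x. x - 1) v)"])
    show "\<forall>a\<in>?S. (\<lambda>(u,v). (u, map (\<lambda>x. x - 1) v)) (?h a) = a" by (auto simp: map_idI)
    show "\<forall>a\<in>JJ l. ?h ((\<lambda>(u,v). (u, map (\<lambda>x. x - 1) v)) a) = a"
      by (auto simp: JJ_def intro!: map_idI)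
    show "?h ` ?S \<subseteq> JJ l" by (auto simp: JJ_def)
    show "(\<lambda>(u,v). (u, map (\<lambda>x. x - 1) v)) ` JJ l \<subseteq> ?S" by (auto simp: JJ_def)
  qed
  have famEq: "G (NN (\<lambda>j. u!(j-1)) [1..<l+1] vs) (LL (\<lambda>j. u!(j-1)) A B [1..<l+1] vs) = ?Fam (?h (u,vs))"
    if u: "u \<in> decr_tuples l" and vs: "length vs = l" for u vs
  proof -
    have lu: "length u = l" using u by (simp add: decr_tuples_def)
    have 1: "NN (\<lambda>j. u!(j-1)) [1..<l+1] vs = NF u (map Suc vs)"
      unfolding NN_def NF_def using lu vs by (intro sum.cong) (auto simp del: upt_Suc simp add: nth_upt)
    have 2: "LL (\<lambda>j. u!(j-1)) A B [1..<l+1] vs = LFF A B u (map Suc vs)"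
      unfolding LL_def LFF_def using lu vs by (intro ext sum.cong) (auto simp del: upt_Suc simp add: nth_upt)
    show ?thesis using 1 2 by simp
  qed
  have lfS: "LF (\<lambda>(u,vs). G (NN (\<lambda>j. u!(j-1)) [1..<l+1] vs) (LL (\<lambda>j. u!(j-1)) A B [1..<l+1] vs)) ?S
     (\<lambda>x. (\<lambda>(u,v). NF u v) (?h x))"
  proof (rule LF_cong[OF LF_reindex[OF bij LF_JJ]])
    fix x assume "x \<in> ?S"
    then obtain u vs where x: "x = (u,vs)" "u \<in> decr_tuples l" "length vs = l" by auto
    show "?Fam (?h x) = (\<lambda>(u,vs). G (NN (\<lambda>j. u!(j-1)) [1..<l+1] vs) (LL (\<lambda>j. u!(j-1)) A B [1..<l+1] vs)) x"
      unfolding x using famEq[OF x(2,3)] by simp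
  qed
  have "mps_sum (\<lambda>u. mps_listprod (map (\<lambda>j. mps_mult (En (u!(j-1)) (lin (A j))) (Ln (u!(j-1)) (lin (B j)))) [1..<l+1])) (decr_tuples l)
     = mps_sum (\<lambda>u. mps_sum (\<lambda>vs. G (NN (\<lambda>j. u!(j-1)) [1..<l+1] vs) (LL (\<lambda>j. u!(j-1)) A B [1..<l+1] vs)) {vs. length vs = l}) (decr_tuples l)"
  proof (rule mps_sum_cong)
    fix u assume u: "u \<in> decr_tuples l"
    have pos: "\<forall>j\<in>set [1..<l+1]. 1 \<le> u!(j-1)"
    proof
      fix j assume "j \<in> set [1..<l+1]"
      then have "j - 1 < length u" using u by (auto simp: decr_tuples_def)
      then have "u!(j-1) \<in> set u" by simp
      then show "1 \<le> u!(j-1)" using u by (auto simp: decr_tuples_def Suc_le_eq)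
    qed
    have meq: "map (\<lambda>j. mps_mult (En (u!(j-1)) (lin (A j))) (Ln (u!(j-1)) (lin (B j)))) [1..<l+1]
        = map (\<lambda>j. mps_sum (\<lambda>k. G (Suc k * u!(j-1)) (\<lambda>w. of_nat (u!(j-1)) * A j w + of_nat (Suc k) * B j w)) UNIV) [1..<l+1]"
      using pos by (intro map_cong refl EL_lin) auto
    show "mps_listprod (map (\<lambda>j. mps_mult (En (u!(j-1)) (lin (A j))) (Ln (u!(j-1)) (lin (B j)))) [1..<l+1])
        = mps_sum (\<lambda>vs. G (NN (\<lambda>j. u!(j-1)) [1..<l+1] vs) (LL (\<lambda>j. u!(j-1)) A B [1..<l+1] vs)) {vs. length vs = l}"
      unfolding meq using listprod_EL[OF pos, of A B] by simp
  qed
  also have "\<dots> = mps_sum (\<lambda>(u,vs). G (NN (\<lambda>j. u!(j-1)) [1..<l+1] vs) (LL (\<lambda>j. u!(j-1)) A B [1..<l+1] vs)) ?S"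
    by (rule sum_Sigma[OF lfS])
  also have "\<dots> = mps_sum (\<lambda>x. ?Fam (?h x)) ?S"
  proof (rule mps_sum_cong)
    fix x assume "x \<in> ?S"
    then obtain u vs where x: "x = (u,vs)" "u \<in> decr_tuples l" "length vs = l" by auto
    show "(\<lambda>(u,vs). G (NN (\<lambda>j. u!(j-1)) [1..<l+1] vs) (LL (\<lambda>j. u!(j-1)) A B [1..<l+1] vs)) x = ?Fam (?h x)"
      unfolding x using famEq[OF x(2,3)] by simp
  qed
  also have "\<dots> = mps_sum ?Fam (JJ l)"
    by (rule sum_reindex[OF bij, symmetric])
  finally show ?thesis .
qed

definition dl :: "var \<Rightarrow> var \<Rightarrow> rat" where "dl v w = (if w = v then 1 else 0)"

lemma eval_JJ:
  "mps_sum (\<lambda>(u,v). G (NF u v) (LFF A B u v)) (JJ l) m =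
   (\<Sum>x\<in>{x\<in>JJ l. NF (fst x) (snd x) = lk m Q}. G (NF (fst x) (snd x)) (LFF A B (fst x) (snd x)) m)"
proof -
  have "mps_sum (\<lambda>(u,v). G (NF u v) (LFF A B u v)) (JJ l) m =
   (\<Sum>x\<in>{x\<in>JJ l. NF (fst x) (snd x) = lk m Q}. (\<lambda>(u,v). G (NF u v) (LFF A B u v)) x m)"
  proof (rule mps_sum_eval)
  have "finite {x\<in>JJ l. (\<lambda>(u,v). NF u v) x \<le> lk m Q}" using LF_JJ[of A B l] unfolding LF_def by blast
  then show "finite {x\<in>JJ l. NF (fst x) (snd x) = lk m Q}"
    by (rule finite_subset[rotated]) (auto simp: case_prod_beta)
  show "{x\<in>JJ l. NF (fst x) (snd x) = lk m Q} \<subseteq> JJ l" by auto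
  fix x assume "x \<in> JJ l" "x \<notin> {x\<in>JJ l. NF (fst x) (snd x) = lk m Q}"
  then show "(\<lambda>(u,v). G (NF u v) (LFF A B u v)) x m = 0"
    using G_nz[of "NF (fst x) (snd x)" "LFF A B (fst x) (snd x)" m] by (auto simp: case_prod_beta)
  qed
  then show ?thesis by (simp add: case_prod_beta)
qed

definition Wl :: "nat \<Rightarrow> var set" where
  "Wl l = {X j |j. 1 \<le> j \<and> j \<le> l} \<union> {Y j |j. 1 \<le> j \<and> j \<le> l}"

lemma img_aux: "{F j |j. 1 \<le> j \<and> j \<le> l} = (\<lambda>i. F (Suc i)) ` {..<l}"
proof
  show "{F j |j. 1 \<le> j \<and> j \<le> l} \<subseteq> (\<lambda>i. F (Suc i)) ` {..<l}"
  proof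
    fix w assume "w \<in> {F j |j. 1 \<le> j \<and> j \<le> l}"
    then obtain j where j: "w = F j" "1 \<le> j" "j \<le> l" by auto
    then have "w = F (Suc (j - 1))" "j - 1 \<in> {..<l}" by auto
    then show "w \<in> (\<lambda>i. F (Suc i)) ` {..<l}" by blast
  qed
  show "(\<lambda>i. F (Suc i)) ` {..<l} \<subseteq> {F j |j. 1 \<le> j \<and> j \<le> l}" by auto
qed

lemma Wl_img: "Wl l = (\<lambda>i. X (Suc i)) ` {..<l} \<union> (\<lambda>i. Y (Suc i)) ` {..<l}"
  unfolding Wl_def img_aux[of X] img_aux[of Y] ..

lemma sum_delta_mult: "i < (n::nat) \<Longrightarrow> (\<Sum>ia<n. f ia * (if i = ia then 1 else (0::rat))) = f i"
proof -
  assume i: "i < n"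
  have "(\<Sum>ia<n. f ia * (if i = ia then 1 else (0::rat))) = (\<Sum>ia<n. if ia = i then f ia else 0)"
    by (rule sum.cong) auto
  also have "\<dots> = (if i \<in> {..<n} then f i else 0)" by (rule sum.delta) simp
  finally show ?thesis using i by simp
qed

lemma prod_Wl:
  assumes "\<And>w. f w 0 = 1" "ks m - {Q} \<subseteq> Wl l"
  shows "(\<Prod>w\<in>ks m - {Q}. f w (lk m w)) = (\<Prod>i<l. f (X (Suc i)) (lk m (X (Suc i))) * f (Y (Suc i)) (lk m (Y (Suc i))))"
proof -
  have fin: "finite (Wl l)" unfolding Wl_img by simp
  have "(\<Prod>w\<in>ks m - {Q}. f w (lk m w)) = (\<Prod>w\<in>Wl l. f w (lk m w))"
    using assms fin by (intro prod.mono_neutral_left) (auto simp: in_keys_iff Wl_def)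
  also have "\<dots> = (\<Prod>w\<in>(\<lambda>i. X (Suc i)) ` {..<l}. f w (lk m w)) * (\<Prod>w\<in>(\<lambda>i. Y (Suc i)) ` {..<l}. f w (lk m w))"
    unfolding Wl_img by (rule prod.union_disjoint) auto
  also have "\<dots> = (\<Prod>i<l. f (X (Suc i)) (lk m (X (Suc i)))) * (\<Prod>i<l. f (Y (Suc i)) (lk m (Y (Suc i))))"
    by (simp add: prod.reindex inj_on_def)
  finally show ?thesis by (simp add: prod.distrib)
qed

lemma LFF1_X: "i < length u \<Longrightarrow> LFF (\<lambda>j. dl (Y j)) (\<lambda>j. dl (X j)) u v (X (Suc i)) = of_nat (v!i)"
  unfolding LFF_def dl_def by (simp add: sum_delta_mult)

lemma LFF1_Y: "i < length u \<Longrightarrow> LFF (\<lambda>j. dl (Y j)) (\<lambda>j. dl (X j)) u v (Y (Suc i)) = of_nat (u!i)"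
  unfolding LFF_def dl_def by (simp add: sum_delta_mult)

lemma LFF1_other: "w \<notin> Wl (length u) \<Longrightarrow> LFF (\<lambda>j. dl (Y j)) (\<lambda>j. dl (X j)) u v w = 0"
  unfolding LFF_def dl_def Wl_def by (intro sum.neutral) auto

lemma T1: "Tgen l = mps_sum (\<lambda>(u,v). G (NF u v) (LFF (\<lambda>j. dl (Y j)) (\<lambda>j. dl (X j)) u v)) (JJ l)"
proof
  fix m :: mono
  let ?A = "\<lambda>j. dl (Y j)" and ?B = "\<lambda>j. dl (X j)"
  let ?S = "{x\<in>JJ l. NF (fst x) (snd x) = lk m Q}"
  have R: "mps_sum (\<lambda>(u,v). G (NF u v) (LFF ?A ?B u v)) (JJ l) m = (\<Sum>x\<in>?S. G (NF (fst x) (snd x)) (LFF ?A ?B (fst x) (snd x)) m)"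
    by (rule eval_JJ)
  show "Tgen l m = mps_sum (\<lambda>(u,v). G (NF u v) (LFF ?A ?B u v)) (JJ l) m"
  proof (cases "ks m \<subseteq> {Q} \<union> {X j |j. 1 \<le> j \<and> j \<le> l} \<union> {Y j |j. 1 \<le> j \<and> j \<le> l}")
    case True
    then have sub: "ks m - {Q} \<subseteq> Wl l" unfolding Wl_def by auto
    let ?s = "map (\<lambda>j. lk m (X j) + 1) [1..<l+1]" and ?r = "map (\<lambda>j. lk m (Y j)) [1..<l+1]"
    have setEq: "{(u, v). length u = length ?s \<and> length v = length ?s \<and> sorted_wrt (>) u \<and> (\<forall>x\<in>set u. 0 < x) \<and> (\<forall>x\<in>set v. 0 < x)
                      \<and> (\<Sum>j<length ?s. u ! j * v ! j) = lk m Q} = ?S"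
      by (auto simp: JJ_def decr_tuples_def NF_def)
    have "Tgen l m = (\<Sum>(u, v)\<in>?S. \<Prod>j<length ?s. (of_nat (u ! j)) ^ (?r ! j) / fact (?r ! j)
                    * (of_nat (v ! j)) ^ (?s ! j - 1) / fact (?s ! j - 1))"
      using True unfolding Tgen_def bibracket_def setEq[symmetric] by simp
    also have "\<dots> = (\<Sum>x\<in>?S. G (NF (fst x) (snd x)) (LFF ?A ?B (fst x) (snd x)) m)"
    proof (rule sum.cong)
      fix x assume x: "x \<in> ?S"
      obtain u v where xuv: "x = (u,v)" by force
      have lu: "length u = l" using x xuv by (simp add: JJ_def decr_tuples_def)
      have "G (NF u v) (LFF ?A ?B u v) m = (\<Prod>w\<in>ks m - {Q}. (LFF ?A ?B u v w)^(lk m w) / fact (lk m w))"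
        using x xuv by (simp add: G_explicit)
      also have "\<dots> = (\<Prod>i<l. (LFF ?A ?B u v (X (Suc i)))^(lk m (X (Suc i))) / fact (lk m (X (Suc i)))
                  * ((LFF ?A ?B u v (Y (Suc i)))^(lk m (Y (Suc i))) / fact (lk m (Y (Suc i)))))"
        by (rule prod_Wl[OF _ sub]) simp
      also have "\<dots> = (\<Prod>j<length ?s. (of_nat (u ! j)) ^ (?r ! j) / fact (?r ! j)
                    * (of_nat (v ! j)) ^ (?s ! j - 1) / fact (?s ! j - 1))"
        by (rule prod.cong) (auto simp: LFF1_X LFF1_Y lu nth_upt mult_ac)
      finally show "(\<lambda>(u, v). \<Prod>j<length ?s. (of_nat (u ! j)) ^ (?r ! j) / fact (?r ! j)
                    * (of_nat (v ! j)) ^ (?s ! j - 1) / fact (?s ! j - 1)) x = G (NF (fst x) (snd x)) (LFF ?A ?B (fst x) (snd x)) m"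
        using xuv by simp
    qed simp
    finally show ?thesis using R by simp
  next
    case False
    then obtain w where w: "w \<in> ks m" "w \<noteq> Q" "w \<notin> Wl l" unfolding Wl_def by auto
    have "G (NF (fst x) (snd x)) (LFF ?A ?B (fst x) (snd x)) m = 0" if x: "x \<in> ?S" for x
    proof -
      have lu: "length (fst x) = l" using x by (auto simp: JJ_def decr_tuples_def)
      have "LFF ?A ?B (fst x) (snd x) w = 0" using w lu LFF1_other by simp
      moreover have "lk m w \<noteq> 0" using w by (simp add: in_keys_iff)
      ultimately have "(\<Prod>w\<in>ks m - {Q}. (LFF ?A ?B (fst x) (snd x) w)^(lk m w) / fact (lk m w)) = 0"
        using w by (intro prod_zero) (auto intro!: bexI[of _ w])
      then show ?thesis by (simp add: G_explicit)
    qed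
    then show ?thesis using R False by (simp add: Tgen_def)
  qed
qed

definition Pm :: "nat list \<Rightarrow> nat list" where
  "Pm v = map (\<lambda>i. \<Sum>j<length v - i. v!j) [0..<length v]"

definition Dm :: "nat list \<Rightarrow> nat list" where
  "Dm u = map (\<lambda>k. u!(length u - 1 - k) - (if k = 0 then 0 else u!(length u - k))) [0..<length u]"

lemma Pm_len[simp]: "length (Pm v) = length v" by (simp add: Pm_def)
lemma Dm_len[simp]: "length (Dm u) = length u" by (simp add: Dm_def)
lemma Pm_nth: "i < length v \<Longrightarrow> Pm v ! i = (\<Sum>j<length v - i. v!j)" by (simp add: Pm_def)
lemma Dm_nth: "k < length u \<Longrightarrow> Dm u ! k = u!(length u - 1 - k) - (if k = 0 then 0 else u!(length u - k))"
  by (simp add: Dm_def)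

lemma telescope:
  "(\<And>k. 1 \<le> k \<Longrightarrow> k < n \<Longrightarrow> b (k - 1) \<le> b k) \<Longrightarrow> 1 \<le> (n::nat) \<Longrightarrow>
    (\<Sum>k<n. b k - (if k = 0 then 0 else b (k - 1))) = (b (n - 1) :: nat)"
proof (induction n)
  case 0 then show ?case by simp
next
  case (Suc n)
  show ?case
  proof (cases "n = 0")
    case True then show ?thesis by simp
  next
    case False
    then have IH: "(\<Sum>k<n. b k - (if k = 0 then 0 else b (k - 1))) = b (n - 1)"
      using Suc.prems by (intro Suc.IH) auto
    have "b (n - 1) \<le> b n" using Suc.prems(1)[of n] False by simp
    then show ?thesis using IH False by simp
  qed
qed

lemma decr_nth: "u \<in> decr_tuples l \<Longrightarrow> i < j \<Longrightarrow> j < length u \<Longrightarrow> u!j < u!i"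
  unfolding decr_tuples_def by (auto simp: sorted_wrt_iff_nth_less)

lemma decr_pos: "u \<in> decr_tuples l \<Longrightarrow> i < length u \<Longrightarrow> 0 < u!i"
  unfolding decr_tuples_def by auto

lemma PD: assumes u: "u \<in> decr_tuples l" shows "Pm (Dm u) = u"
proof (rule nth_equalityI)
  show "length (Pm (Dm u)) = length u" by simp
  fix i assume i: "i < length (Pm (Dm u))"
  let ?n = "length u"
  let ?b = "\<lambda>k. u!(?n - 1 - k)"
  have "Pm (Dm u) ! i = (\<Sum>k<?n - i. Dm u ! k)" using i by (simp add: Pm_nth)
  also have "\<dots> = (\<Sum>k<?n - i. ?b k - (if k = 0 then 0 else ?b (k - 1)))"
  proof (rule sum.cong)
    fix k assume k: "k \<in> {..<?n - i}"
    then have "?n - 1 - (k - 1) = ?n - k" if "k \<noteq> 0" using that by simp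
    then show "Dm u ! k = ?b k - (if k = 0 then 0 else ?b (k - 1))" using k by (simp add: Dm_nth)
  qed simp
  also have "\<dots> = ?b (?n - i - 1)"
  proof (rule telescope)
    fix k assume k: "1 \<le> k" "k < ?n - i"
    have "?n - 1 - (k - 1) = ?n - k" using k by simp
    moreover have "u!(?n - k) < u!(?n - 1 - k)" using k i by (intro decr_nth[OF u]) auto
    ultimately show "?b (k - 1) \<le> ?b k" by simp
  qed (use i in simp)
  also have "\<dots> = u!i" using i by (simp add: Suc_diff_Suc)
  finally show "Pm (Dm u) ! i = u ! i" .
qed

lemma DP: "Dm (Pm v) = v"
proof (rule nth_equalityI)
  show "length (Dm (Pm v)) = length v" by simp
  fix k assume k: "k < length (Dm (Pm v))"
  let ?n = "length v"
  have k': "k < ?n" using k by simp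
  have 1: "Pm v ! (?n - 1 - k) = (\<Sum>j<Suc k. v!j)" using k' by (simp add: Pm_nth Suc_diff_Suc)
  have 2: "Pm v ! (?n - k) = (\<Sum>j<k. v!j)" if "k \<noteq> 0" using k' that by (simp add: Pm_nth)
  show "Dm (Pm v) ! k = v ! k"
    using k' 1 2 by (simp add: Dm_nth)
qed

lemma Pm_decr:
  assumes l: "length v = l" and pv: "\<forall>x\<in>set v. 0 < x"
  shows "Pm v \<in> decr_tuples l"
proof -
  have pos: "0 < v!j" if "j < length v" for j using pv that by auto
  have dec: "Pm v ! j < Pm v ! i" if ij: "i < j" "j < length v" for i j
  proof -
    have "(\<Sum>x<length v - i. v!x) = (\<Sum>x<length v - j. v!x) + (\<Sum>x\<in>{length v - j..<length v - i}. v!x)"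
    proof -
      have e: "{..<length v - i} = {..<length v - j} \<union> {length v - j..<length v - i}" using ij by auto
      show ?thesis by (subst e) (rule sum.union_disjoint; auto)
    qed
    moreover have "0 < (\<Sum>x\<in>{length v - j..<length v - i}. v!x)"
    proof -
      have "v!(length v - j) \<le> (\<Sum>x\<in>{length v - j..<length v - i}. v!x)"
        using ij by (intro member_le_sum) auto
      moreover have "0 < v!(length v - j)" using pos ij by simp
      ultimately show ?thesis by linarith
    qed
    ultimately show ?thesis using ij by (simp add: Pm_nth)
  qed
  have ps: "0 < Pm v ! i" if "i < length v" for i
  proof -
    have "v!0 \<le> (\<Sum>x<length v - i. v!x)" using that by (intro member_le_sum) auto
    moreover have "0 < v!0" using pos[of 0] that by (cases v) auto
    ultimately have "0 < (\<Sum>x<length v - i. v!x)" by linarith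
    then show ?thesis using that by (simp add: Pm_nth)
  qed
  have s: "sorted_wrt (>) (Pm v)" unfolding sorted_wrt_iff_nth_less using dec by auto
  have p: "\<forall>x\<in>set (Pm v). 0 < x"
  proof
    fix x assume "x \<in> set (Pm v)"
    then obtain i where "i < length v" "x = Pm v ! i" by (auto simp: in_set_conv_nth)
    then show "0 < x" using ps by simp
  qed
  show ?thesis using l s p by (simp add: decr_tuples_def)
qed

lemma Dm_pos:
  assumes u: "u \<in> decr_tuples l"
  shows "\<forall>x\<in>set (Dm u). 0 < x"
proof
  fix x assume "x \<in> set (Dm u)"
  then obtain k where k: "k < length u" "x = Dm u ! k" by (auto simp: in_set_conv_nth)
  show "0 < x"
  proof (cases "k = 0")
    case True then show ?thesis using k decr_pos[OF u, of "length u - 1"] by (simp add: Dm_nth)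
  next
    case False
    then have "u!(length u - k) < u!(length u - 1 - k)" using k by (intro decr_nth[OF u]) auto
    then show ?thesis using k False by (simp add: Dm_nth)
  qed
qed

lemma sum_if_less: "k \<le> (n::nat) \<Longrightarrow> (\<Sum>j<n. if j < k then g j else 0) = (\<Sum>j<k. g j)"
proof -
  assume k: "k \<le> n"
  have "(\<Sum>j<n. if j < k then g j else 0) = (\<Sum>j<k. if j < k then g j else 0)"
    using k by (intro sum.mono_neutral_right) auto
  also have "\<dots> = (\<Sum>j<k. g j)" by (rule sum.cong) auto
  finally show ?thesis .
qed

lemma sum_single: "i0 < (n::nat) \<Longrightarrow> (\<And>i. i < n \<Longrightarrow> i \<noteq> i0 \<Longrightarrow> g i = 0) \<Longrightarrow> (\<Sum>i<n. g i) = g i0"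
proof -
  assume i0: "i0 < n" and z: "\<And>i. i < n \<Longrightarrow> i \<noteq> i0 \<Longrightarrow> g i = 0"
  have "(\<Sum>i<n. g i) = g i0 + (\<Sum>i\<in>{..<n} - {i0}. g i)" using i0 by (simp add: sum.remove)
  also have "(\<Sum>i\<in>{..<n} - {i0}. g i) = 0" using z by (intro sum.neutral) auto
  finally show ?thesis by simp
qed

lemma NF_PD:
  assumes "(u,v) \<in> JJ l"
  shows "NF (Pm v) (Dm u) = NF u v"
proof -
  have lu: "length u = l" and lv: "length v = l" and u: "u \<in> decr_tuples l" using assms by (auto simp: JJ_def decr_tuples_def)
  have "NF (Pm v) (Dm u) = (\<Sum>i<l. (\<Sum>j<l - i. v!j) * Dm u ! i)"
    unfolding NF_def using lv by (intro sum.cong) (auto simp: Pm_nth)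
  also have "\<dots> = (\<Sum>i<l. \<Sum>j<l. if j < l - i then v!j * Dm u ! i else 0)"
    by (intro sum.cong refl) (simp add: sum_if_less sum_distrib_right)
  also have "\<dots> = (\<Sum>j<l. \<Sum>i<l. if j < l - i then v!j * Dm u ! i else 0)"
    by (rule sum.swap)
  also have "\<dots> = (\<Sum>j<l. \<Sum>i<l. if i < l - j then v!j * Dm u ! i else 0)"
    by (intro sum.cong refl) auto
  also have "\<dots> = (\<Sum>j<l. v!j * (\<Sum>i<l - j. Dm u ! i))"
    by (intro sum.cong refl) (simp add: sum_if_less sum_distrib_left)
  also have "\<dots> = (\<Sum>j<l. v!j * (Pm (Dm u) ! j))"
    using lu by (intro sum.cong refl) (simp add: Pm_nth)
  also have "\<dots> = NF u v" unfolding PD[OF u] NF_def lu by (simp add: mult.commute)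
  finally show ?thesis .
qed

definition xv :: "nat \<Rightarrow> nat \<Rightarrow> var \<Rightarrow> rat" where
  "xv l i = (if i = l + 1 then (\<lambda>_. 0) else dl (X i))"

definition ys :: "nat \<Rightarrow> var \<Rightarrow> rat" where
  "ys k w = sum_list (map (\<lambda>i. dl (Y i) w) [1..<k+1])"

lemma ys_sum: "ys k w = (\<Sum>i\<in>{1..k}. dl (Y i) w)"
proof -
  have "ys k w = sum (\<lambda>i. dl (Y i) w) (set [1..<k+1])"
    unfolding ys_def by (rule interv_sum_list_conv_sum_set_nat)
  also have "set [1..<k+1] = {1..k}" by auto
  finally show ?thesis .
qed

lemma ys_Y: "ys k (Y c) = (if 1 \<le> c \<and> c \<le> k then 1 else 0)"
proof -
  have "ys k (Y c) = (\<Sum>i\<in>{1..k}. if i = c then 1 else 0)"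
    unfolding ys_sum dl_def by (intro sum.cong) auto
  then show ?thesis by simp
qed

lemma ys_notY: "(\<And>c. w \<noteq> Y c) \<Longrightarrow> ys k w = 0"
  unfolding ys_sum dl_def by (intro sum.neutral) auto

definition A2 :: "nat \<Rightarrow> nat \<Rightarrow> var \<Rightarrow> rat" where
  "A2 l j w = xv l (l + 1 - j) w - xv l (l + 2 - j) w"

definition B2 :: "nat \<Rightarrow> nat \<Rightarrow> var \<Rightarrow> rat" where
  "B2 l j w = ys (l - j + 1) w"

lemma LFF2_eq:
  assumes "(u,v) \<in> JJ l"
  shows "LFF (A2 l) (B2 l) u v w = LFF (\<lambda>j. dl (Y j)) (\<lambda>j. dl (X j)) (Pm v) (Dm u) w"
proof -
  have lu: "length u = l" and lv: "length v = l" and u: "u \<in> decr_tuples l" using assms by (auto simp: JJ_def decr_tuples_def)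
  let ?S1 = "(\<Sum>i<l. of_nat (u!i) * xv l (l - i) w)"
  let ?S2 = "(\<Sum>i<l. of_nat (u!i) * xv l (l + 1 - i) w)"
  let ?S3 = "(\<Sum>i<l. of_nat (v!i) * ys (l - i) w)"
  have "LFF (A2 l) (B2 l) u v w = (\<Sum>i<l. of_nat (u!i) * xv l (l - i) w - of_nat (u!i) * xv l (l + 1 - i) w + of_nat (v!i) * ys (l - i) w)"
    unfolding LFF_def lu
  proof (rule sum.cong)
    fix i assume i: "i \<in> {..<l}"
    then have "l + 1 - Suc i = l - i" "l + 2 - Suc i = l + 1 - i" "l - Suc i + 1 = l - i" by auto
    then show "of_nat (u!i) * A2 l (Suc i) w + of_nat (v!i) * B2 l (Suc i) w =
        of_nat (u!i) * xv l (l - i) w - of_nat (u!i) * xv l (l + 1 - i) w + of_nat (v!i) * ys (l - i) w"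
      unfolding A2_def B2_def by (simp add: algebra_simps)
  qed simp
  also have "\<dots> = ?S1 - ?S2 + ?S3" by (simp add: sum.distrib sum_subtractf)
  finally have split: "LFF (A2 l) (B2 l) u v w = ?S1 - ?S2 + ?S3" .
  have lP: "length (Pm v) = l" using lv by simp
  show ?thesis
  proof (cases "w \<in> Wl l")
    case False
    have "?S1 = 0"
    proof (intro sum.neutral ballI)
      fix i assume "i \<in> {..<l}"
      then have "X (l - i) \<in> Wl l" by (auto simp: Wl_def)
      then show "of_nat (u!i) * xv l (l - i) w = 0" using False by (auto simp: xv_def dl_def)
    qed
    moreover have "?S2 = 0"
    proof (intro sum.neutral ballI)
      fix i assume "i \<in> {..<l}"
      then have "i \<noteq> 0 \<Longrightarrow> X (l + 1 - i) \<in> Wl l" by (auto simp: Wl_def)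
      then show "of_nat (u!i) * xv l (l + 1 - i) w = 0" using False by (cases "i = 0") (auto simp: xv_def dl_def)
    qed
    moreover have "?S3 = 0"
    proof (intro sum.neutral ballI)
      fix i assume "i \<in> {..<l}"
      show "of_nat (v!i) * ys (l - i) w = 0"
      proof (cases "\<exists>c. w = Y c")
        case True
        then obtain c where c: "w = Y c" by blast
        then have "\<not> (1 \<le> c \<and> c \<le> l)" using False by (auto simp: Wl_def)
        then show ?thesis using c by (auto simp: ys_Y)
      next
        case False then show ?thesis by (simp add: ys_notY)
      qed
    qed
    ultimately show ?thesis using split LFF1_other[of w "Pm v" "Dm u"] False lP by simp
  next
    case True
    then obtain a where a: "a < l" "w = X (Suc a) \<or> w = Y (Suc a)" unfolding Wl_img by auto
    from a(2) show ?thesis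
    proof
      assume w: "w = X (Suc a)"
      have "?S1 = of_nat (u!i0) * xv l (l - i0) w" if i0: "i0 = l - 1 - a" for i0
      proof (rule sum_single)
        show "i0 < l" using a i0 by simp
        fix i assume "i < l" "i \<noteq> i0"
        then have "Suc a \<noteq> l - i" using i0 by auto
        then show "of_nat (u!i) * xv l (l - i) w = 0" using w \<open>i < l\<close> by (simp add: xv_def dl_def)
      qed
      then have "?S1 = of_nat (u!(l - 1 - a))" using a w by (simp add: xv_def dl_def)
      moreover have "?S2 = (if a = 0 then 0 else of_nat (u!(l - a)))"
      proof (cases "a = 0")
        case True
        have "?S2 = 0"
        proof (intro sum.neutral ballI)
          fix i assume "i \<in> {..<l}"
          then show "of_nat (u!i) * xv l (l + 1 - i) w = 0" using w True by (auto simp: xv_def dl_def)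
        qed
        then show ?thesis using True by simp
      next
        case False
        have "?S2 = of_nat (u!i0) * xv l (l + 1 - i0) w" if "i0 = l - a" for i0
        proof (rule sum_single)
          show "i0 < l" using that False a by simp
          fix i assume "i < l" "i \<noteq> i0"
          then show "of_nat (u!i) * xv l (l + 1 - i) w = 0" using w that a by (auto simp: xv_def dl_def)
        qed
        then show ?thesis using False a w by (simp add: xv_def dl_def)
      qed
      moreover have "?S3 = 0" using w by (intro sum.neutral) (simp add: ys_notY)
      moreover have "LFF (\<lambda>j. dl (Y j)) (\<lambda>j. dl (X j)) (Pm v) (Dm u) w = of_nat (Dm u ! a)"
        using w a lP by (simp add: LFF1_X)
      moreover have "of_nat (Dm u ! a) = of_nat (u!(l - 1 - a)) - (if a = 0 then 0 else (of_nat (u!(l - a)) :: rat))"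
      proof (cases "a = 0")
        case True then show ?thesis using a lu by (simp add: Dm_nth)
      next
        case False
        then have "u!(l - a) < u!(l - 1 - a)" using a lu by (intro decr_nth[OF u]) auto
        then show ?thesis using False a lu by (simp add: Dm_nth of_nat_diff)
      qed
      ultimately show ?thesis using split by simp
    next
      assume w: "w = Y (Suc a)"
      have "?S1 = 0" using w by (intro sum.neutral) (simp add: xv_def dl_def)
      moreover have "?S2 = 0" using w by (intro sum.neutral) (simp add: xv_def dl_def)
      moreover have "?S3 = (\<Sum>i<l - a. of_nat (v!i))"
      proof -
        have "?S3 = (\<Sum>i<l. if i < l - a then of_nat (v!i) else 0)"
          using w by (intro sum.cong) (auto simp: ys_Y)
        then show ?thesis by (simp add: sum_if_less)
      qed
      moreover have "LFF (\<lambda>j. dl (Y j)) (\<lambda>j. dl (X j)) (Pm v) (Dm u) w = of_nat (Pm v ! a)"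
        using w a lP by (simp add: LFF1_Y)
      moreover have "Pm v ! a = (\<Sum>i<l - a. v!i)" using a lv by (simp add: Pm_nth)
      ultimately show ?thesis using split by simp
    qed
  qed
qed

lemma T2:
  "mps_sum (\<lambda>(u,v). G (NF u v) (LFF (A2 l) (B2 l) u v)) (JJ l) =
   mps_sum (\<lambda>(u,v). G (NF u v) (LFF (\<lambda>j. dl (Y j)) (\<lambda>j. dl (X j)) u v)) (JJ l)"
proof -
  let ?h = "\<lambda>(u,v). (Pm v, Dm u)"
  have inJJ: "?h x \<in> JJ l" if "x \<in> JJ l" for x
  proof -
    obtain u v where x: "x = (u,v)" by force
    have u: "u \<in> decr_tuples l" and lv: "length v = l" and pv: "\<forall>y\<in>set v. 0 < y" using that x by (auto simp: JJ_def)
    have "length (Dm u) = l" using u by (simp add: decr_tuples_def)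
    then show ?thesis using Pm_decr[OF lv pv] Dm_pos[OF u] x by (simp add: JJ_def)
  qed
  have inv: "?h (?h x) = x" if "x \<in> JJ l" for x
  proof -
    obtain u v where x: "x = (u,v)" by force
    have u: "u \<in> decr_tuples l" using that x by (auto simp: JJ_def)
    show ?thesis using x PD[OF u] DP[of v] by simp
  qed
  have bij: "bij_betw ?h (JJ l) (JJ l)"
    by (rule bij_betw_byWitness[where f'="?h"]) (use inv inJJ in auto)
  have "mps_sum (\<lambda>(u,v). G (NF u v) (LFF (\<lambda>j. dl (Y j)) (\<lambda>j. dl (X j)) u v)) (JJ l) =
        mps_sum (\<lambda>x. (\<lambda>(u,v). G (NF u v) (LFF (\<lambda>j. dl (Y j)) (\<lambda>j. dl (X j)) u v)) (?h x)) (JJ l)"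
    by (rule sum_reindex[OF bij])
  also have "\<dots> = mps_sum (\<lambda>(u,v). G (NF u v) (LFF (A2 l) (B2 l) u v)) (JJ l)"
  proof (rule mps_sum_cong)
    fix x assume x: "x \<in> JJ l"
    obtain u v where xuv: "x = (u,v)" by force
    have "LFF (\<lambda>j. dl (Y j)) (\<lambda>j. dl (X j)) (Pm v) (Dm u) = LFF (A2 l) (B2 l) u v"
      using LFF2_eq[of u v l] x xuv by auto
    then show "(\<lambda>x. (\<lambda>(u,v). G (NF u v) (LFF (\<lambda>j. dl (Y j)) (\<lambda>j. dl (X j)) u v)) (?h x)) x =
          (\<lambda>(u,v). G (NF u v) (LFF (A2 l) (B2 l) u v)) x"
      using NF_PD[of u v l] x xuv by simp
  qed
  finally show ?thesis by simp
qed

lemma var_lin: assumes "v \<noteq> Q" shows "mps_var v = lin (dl v)"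
proof
  fix m :: mono
  show "mps_var v m = lin (dl v) m"
  proof (cases "m = Poly_Mapping.single v 1")
    case True
    then show ?thesis using assms by (simp add: mps_var_def lin_def deg_single lookup_single dl_def)
  next
    case False
    show ?thesis
    proof (cases "lk m Q = 0 \<and> deg m = 1")
      case True
      then obtain w where w: "m = Poly_Mapping.single w 1" using deg1 by blast
      then have "w \<noteq> v" using False by auto
      then show ?thesis using False True w by (simp add: mps_var_def lin_def dl_def)
    next
      case F2: False
      then show ?thesis using False by (auto simp: mps_var_def lin_def)
    qed
  qed
qed

lemma const0_lin: "mps_const 0 = lin (\<lambda>_. 0)"
  by (auto simp: mps_const_def lin_def fun_eq_iff)

lemma sub_lin: "mps_sub (lin a) (lin b) = lin (\<lambda>w. a w - b w)"
  by (auto simp: mps_sub_def lin_def fun_eq_iff sum_subtractf)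

lemma add_lin: "mps_add (lin a) (lin b) = lin (\<lambda>w. a w + b w)"
  by (auto simp: mps_add_def lin_def fun_eq_iff sum.distrib)

lemma listsum_lin: "mps_listsum (map (\<lambda>i. lin (f i)) xs) = lin (\<lambda>w. sum_list (map (\<lambda>i. f i w) xs))"
proof (induction xs)
  case Nil then show ?case by (simp add: mps_listsum_def const0_lin)
next
  case (Cons i xs)
  then show ?case by (simp add: mps_listsum_def add_lin)
qed

lemma Ysum_lin: "Ysum k = lin (ys k)"
proof -
  have meq: "map (\<lambda>i. mps_var (Y i)) [1..<k+1] = map (\<lambda>i. lin (dl (Y i))) [1..<k+1]"
    by (intro map_cong refl var_lin) simp
  show ?thesis unfolding Ysum_def ys_def meq by (rule listsum_lin)
qed

lemma Xv_lin: "Xv l i = lin (xv l i)"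
  by (simp add: Xv_def xv_def const0_lin var_lin)

lemma RHS1:
  "Tgen l = mps_sum (\<lambda>u. mps_listprod
                    (map (\<lambda>j. mps_mult (En (u ! (j - 1)) (mps_var (Y j)))
                                      (Ln (u ! (j - 1)) (mps_var (X j)))) [1..<l+1]))
                  (decr_tuples l)"
  unfolding T1 main_family[symmetric] by (simp add: var_lin)

lemma RHS2:
  "Tgen l = mps_sum (\<lambda>u. mps_listprod
                    (map (\<lambda>j. mps_mult (En (u ! (j - 1)) (mps_sub (Xv l (l + 1 - j)) (Xv l (l + 2 - j))))
                                      (Ln (u ! (j - 1)) (Ysum (l - j + 1)))) [1..<l+1]))
                  (decr_tuples l)"
proof -
  have "(\<lambda>j. mps_sub (Xv l (l + 1 - j)) (Xv l (l + 2 - j))) = (\<lambda>j. lin (A2 l j))"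
  proof (rule ext)
    fix j
    have "A2 l j = (\<lambda>w. xv l (l + 1 - j) w - xv l (l + 2 - j) w)" by (rule ext) (simp add: A2_def)
    then show "mps_sub (Xv l (l + 1 - j)) (Xv l (l + 2 - j)) = lin (A2 l j)" by (simp add: Xv_lin sub_lin)
  qed
  moreover have "(\<lambda>j. Ysum (l - j + 1)) = (\<lambda>j. lin (B2 l j))"
  proof (rule ext)
    fix j
    have "B2 l j = ys (l - j + 1)" by (rule ext) (simp add: B2_def)
    then show "Ysum (l - j + 1) = lin (B2 l j)" by (simp add: Ysum_lin)
  qed
  ultimately show ?thesis
    unfolding T1 T2[symmetric] main_family[symmetric] by (metis (no_types))
qed

definition homog :: "nat \<Rightarrow> mps \<Rightarrow> bool" where
  "homog n f \<longleftrightarrow> (\<forall>m. f m \<noteq> 0 \<longrightarrow> deg m = n)"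

lemma homog_mult: "homog a f \<Longrightarrow> homog b g \<Longrightarrow> homog (a + b) (mps_mult f g)"
  unfolding homog_def by (metis deg_add mult_nz_pair)

lemma homog_const1: "homog 0 (mps_const 1)"
  by (simp add: homog_def mps_const_def deg_def)

lemma homog_power: "homog 1 f \<Longrightarrow> homog k (mps_power f k)"
proof (induction k)
  case 0 then show ?case by (simp add: mps_power_def homog_const1)
next
  case (Suc k)
  then have "homog (1 + k) (mps_mult f (mps_power f k))" by (intro homog_mult) auto
  then show ?case by (simp add: mps_power_def)
qed

lemma homog_lin: "homog 1 (lin la)"
  by (simp add: homog_def lin_def)

lemma homog_varQ: "homog 1 (mps_var Q)"
  by (simp add: homog_def mps_var_def deg_single)

lemma homog_smult: "homog n f \<Longrightarrow> homog n (mps_smult c f)"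
  by (simp add: homog_def mps_smult_def)

definition mef :: "(var \<Rightarrow> mps) \<Rightarrow> mono \<Rightarrow> var \<Rightarrow> mps \<Rightarrow> mps" where
  "mef \<sigma> m v acc = mps_mult (mps_power (\<sigma> v) (lk m v)) acc"

lemma mult_left_comm: "mps_mult a (mps_mult b z) = mps_mult b (mps_mult a z)"
  by (simp only: mult_assoc[symmetric] mult_comm[of a b])

lemma mef_cfc: "comp_fun_commute (mef \<sigma> m)"
proof
  fix x y
  show "mef \<sigma> m y \<circ> mef \<sigma> m x = mef \<sigma> m x \<circ> mef \<sigma> m y"
    by (rule ext) (simp only: comp_def mef_def mult_left_comm)
qed

lemma mono_eval_fold: "mono_eval \<sigma> m = Finite_Set.fold (mef \<sigma> m) (mps_const 1) (ks m)"
  unfolding mono_eval_def mef_def ..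

lemma fold_mef_insert:
  "finite A \<Longrightarrow> x \<notin> A \<Longrightarrow> Finite_Set.fold (mef \<sigma> m) z (insert x A) = mef \<sigma> m x (Finite_Set.fold (mef \<sigma> m) z A)"
proof -
  assume "finite A" "x \<notin> A"
  interpret comp_fun_commute "mef \<sigma> m" by (rule mef_cfc)
  show ?thesis using \<open>finite A\<close> \<open>x \<notin> A\<close> by (rule fold_insert)
qed

lemma homog_fold:
  assumes "\<And>v. homog 1 (\<sigma> v)" "finite A"
  shows "homog (\<Sum>v\<in>A. lk m v) (Finite_Set.fold (mef \<sigma> m) (mps_const 1) A)"
  using assms(2)
proof (induction A rule: finite_induct)
  case empty then show ?case by (simp add: homog_const1)
next
  case (insert x A)
  have "homog (lk m x + (\<Sum>v\<in>A. lk m v)) (mef \<sigma> m x (Finite_Set.fold (mef \<sigma> m) (mps_const 1) A))"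
    unfolding mef_def[of \<sigma> m x] using insert assms(1) by (intro homog_mult homog_power) auto
  moreover have "Finite_Set.fold (mef \<sigma> m) (mps_const 1) (insert x A) = mef \<sigma> m x (Finite_Set.fold (mef \<sigma> m) (mps_const 1) A)"
    using insert by (intro fold_mef_insert) auto
  moreover have "(\<Sum>v\<in>insert x A. lk m v) = lk m x + (\<Sum>v\<in>A. lk m v)" using insert by simp
  ultimately show ?case by simp
qed

lemma homog_mono_eval: "(\<And>v. homog 1 (\<sigma> v)) \<Longrightarrow> homog (deg m) (mono_eval \<sigma> m)"
  unfolding mono_eval_fold deg_def by (rule homog_fold) auto

lemma finite_bounded: assumes "finite K" shows "finite {m::mono. ks m \<subseteq> K \<and> deg m \<le> D}"
proof -
  let ?f = "\<lambda>a::mono. restrict (lk a) K"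
  have inj: "inj_on ?f {m::mono. ks m \<subseteq> K \<and> deg m \<le> D}"
  proof (rule inj_onI)
    fix a b assume a: "a \<in> {m::mono. ks m \<subseteq> K \<and> deg m \<le> D}" and b: "b \<in> {m::mono. ks m \<subseteq> K \<and> deg m \<le> D}"
      and e: "?f a = ?f b"
    show "a = b"
    proof (rule poly_mapping_eqI)
      fix w show "lk a w = lk b w"
      proof (cases "w \<in> K")
        case True then show ?thesis using fun_cong[OF e, of w] by simp
      next
        case False
        then have "w \<notin> ks a" "w \<notin> ks b" using a b by auto
        then show ?thesis by (simp add: in_keys_iff)
      qed
    qed
  qed
  have "?f ` {m::mono. ks m \<subseteq> K \<and> deg m \<le> D} \<subseteq> PiE K (\<lambda>w. {..D})"
  proof (rule subsetI)
    fix y assume "y \<in> ?f ` {m::mono. ks m \<subseteq> K \<and> deg m \<le> D}"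
    then obtain a where a: "ks a \<subseteq> K" "deg a \<le> D" "y = ?f a" by auto
    have "\<And>w. lk a w \<le> D" using lk_le_deg[of a] a(2) le_trans by blast
    then show "y \<in> PiE K (\<lambda>w. {..D})" using a(3) by (auto simp: PiE_iff)
  qed
  moreover have "finite (PiE K (\<lambda>w. {..D}))" using assms by (rule finite_PiE) auto
  ultimately have "finite (?f ` {m::mono. ks m \<subseteq> K \<and> deg m \<le> D})" by (rule finite_subset)
  then show ?thesis using inj by (rule finite_imageD)
qed

lemma subst_eval:
  assumes K: "finite K" and supp: "\<And>m. f m \<noteq> 0 \<Longrightarrow> ks m \<subseteq> K" and hom: "\<And>v. homog 1 (\<sigma> v)"
  shows "mps_subst \<sigma> f m' = (\<Sum>m\<in>{m. ks m \<subseteq> K \<and> deg m \<le> deg m'}. f m * mono_eval \<sigma> m m')"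
proof -
  have "mps_subst \<sigma> f m' = (\<Sum>m\<in>{m. ks m \<subseteq> K \<and> deg m \<le> deg m'}. mps_smult (f m) (mono_eval \<sigma> m) m')"
  unfolding mps_subst_def
proof (rule mps_sum_eval)
  show "finite {m. ks m \<subseteq> K \<and> deg m \<le> deg m'}" by (rule finite_bounded[OF K])
  fix m assume "m \<notin> {m. ks m \<subseteq> K \<and> deg m \<le> deg m'}"
  then have "f m = 0 \<or> mono_eval \<sigma> m m' = 0"
    using supp homog_mono_eval[OF hom, of m] unfolding homog_def by force
  then show "mps_smult (f m) (mono_eval \<sigma> m) m' = 0" by (auto simp: mps_smult_def)
qed auto
  then show ?thesis by (simp add: mps_smult_def)
qed

lemma subst_sum:
  assumes lf: "LF F I d" and K: "finite K" and supp: "\<And>i m. i \<in> I \<Longrightarrow> F i m \<noteq> 0 \<Longrightarrow> ks m \<subseteq> K"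
    and hom: "\<And>v. homog 1 (\<sigma> v)"
  shows "mps_subst \<sigma> (mps_sum F I) = mps_sum (\<lambda>i. mps_subst \<sigma> (F i)) I"
proof
  fix m'
  let ?M = "{m. ks m \<subseteq> K \<and> deg m \<le> deg m'}"
  let ?J = "{i\<in>I. d i \<le> deg m'}"
  have fJ: "finite ?J" using lf unfolding LF_def by blast
  have supp2: "ks m \<subseteq> K" if "mps_sum F I m \<noteq> 0" for m
  proof -
    from that obtain i where "i \<in> I" "F i m \<noteq> 0" unfolding mps_sum_def
      by (metis (mono_tags, lifting) mem_Collect_eq sum.neutral)
    then show ?thesis using supp by blast
  qed
  have "mps_subst \<sigma> (mps_sum F I) m' = (\<Sum>m\<in>?M. mps_sum F I m * mono_eval \<sigma> m m')"
    by (rule subst_eval[OF K supp2 hom])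
  also have "\<dots> = (\<Sum>m\<in>?M. \<Sum>i\<in>?J. F i m * mono_eval \<sigma> m m')"
  proof (rule sum.cong[OF refl])
    fix x assume "x \<in> ?M"
    then have "mps_sum F I x = (\<Sum>i\<in>?J. F i x)" using LF_eval[OF lf, of x "deg m'"] by auto
    then show "mps_sum F I x * mono_eval \<sigma> x m' = (\<Sum>i\<in>?J. F i x * mono_eval \<sigma> x m')"
      by (simp add: sum_distrib_right)
  qed
  also have "\<dots> = (\<Sum>i\<in>?J. \<Sum>m\<in>?M. F i m * mono_eval \<sigma> m m')" by (rule sum.swap)
  also have "\<dots> = (\<Sum>i\<in>?J. mps_subst \<sigma> (F i) m')"
    by (intro sum.cong refl) (use subst_eval[OF K supp hom] in auto)
  also have "\<dots> = mps_sum (\<lambda>i. mps_subst \<sigma> (F i)) I m'"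
  proof (rule mps_sum_eval[symmetric])
    fix i assume i: "i \<in> I" "i \<notin> ?J"
    have "mps_subst \<sigma> (F i) m' = (\<Sum>m\<in>?M. F i m * mono_eval \<sigma> m m')"
      by (rule subst_eval[OF K _ hom]) (use supp i in auto)
    also have "\<dots> = 0"
    proof (rule sum.neutral, rule ballI)
      fix m assume m: "m \<in> ?M"
      have "F i m = 0"
      proof (rule ccontr)
        assume "F i m \<noteq> 0"
        then have "d i \<le> deg m" using lf i unfolding LF_def by blast
        then show False using m i by auto
      qed
      then show "F i m * mono_eval \<sigma> m m' = 0" by simp
    qed
    finally show "mps_subst \<sigma> (F i) m' = 0" .
  qed (use fJ in auto)
  finally show "mps_subst \<sigma> (mps_sum F I) m' = mps_sum (\<lambda>i. mps_subst \<sigma> (F i)) I m'" .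
qed

lemma mps_sum_subset: "J \<subseteq> I \<Longrightarrow> (\<And>i. i \<in> I \<Longrightarrow> i \<notin> J \<Longrightarrow> F i = mps_const 0) \<Longrightarrow> mps_sum F I = mps_sum F J"
  unfolding mps_sum_def mps_const_def by (rule ext, rule sum.cong) (auto, metis)

lemma mps_sum_one: "i0 \<in> I \<Longrightarrow> (\<And>i. i \<in> I \<Longrightarrow> i \<noteq> i0 \<Longrightarrow> F i = mps_const 0) \<Longrightarrow> mps_sum F I = F i0"
proof -
  assume "i0 \<in> I" "\<And>i. i \<in> I \<Longrightarrow> i \<noteq> i0 \<Longrightarrow> F i = mps_const 0"
  then have "mps_sum F I = mps_sum F {i0}" by (intro mps_sum_subset) auto
  then show ?thesis by (simp add: mps_sum_single)
qed

lemma mult_smult_right: "mps_mult f (mps_smult c g) = mps_smult c (mps_mult f g)"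
  by (simp add: mult_comm[of f] mult_smult)

lemma G_single_add:
  assumes "x \<noteq> Q" "x \<notin> ks m'"
  shows "G N la (Poly_Mapping.single x k + m') = (la x ^ k / fact k) * G N la m'"
proof (cases "k = 0")
  case True then show ?thesis by simp
next
  case False
  let ?m = "Poly_Mapping.single x k + m'"
  have lkm: "lk ?m w = (if w = x then k else lk m' w)" for w
    using assms by (auto simp: Poly_Mapping.lookup_add lookup_single in_keys_iff)
  have ksm: "ks ?m - {Q} = insert x (ks m' - {Q})"
    using assms False by (auto simp: in_keys_iff lkm split: if_splits)
  have "(\<Prod>w\<in>ks ?m - {Q}. (la w)^(lk ?m w) / fact (lk ?m w)) =
        (la x)^k / fact k * (\<Prod>w\<in>ks m' - {Q}. (la w)^(lk ?m w) / fact (lk ?m w))"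
    unfolding ksm using assms by (simp add: prod.insert lkm)
  also have "(\<Prod>w\<in>ks m' - {Q}. (la w)^(lk ?m w) / fact (lk ?m w)) = (\<Prod>w\<in>ks m' - {Q}. (la w)^(lk m' w) / fact (lk m' w))"
    using assms by (intro prod.cong refl) (auto simp: lkm)
  finally show ?thesis using assms by (simp add: G_explicit lkm)
qed

lemma mono_eval_single_add:
  assumes "x \<notin> ks m'"
  shows "mono_eval \<sigma> (Poly_Mapping.single x k + m') = mps_mult (mps_power (\<sigma> x) k) (mono_eval \<sigma> m')"
proof (cases "k = 0")
  case True then show ?thesis by (simp add: mps_power_def mult_one)
next
  case False
  let ?m = "Poly_Mapping.single x k + m'"
  have lkm: "lk ?m w = (if w = x then k else lk m' w)" for w
    using assms by (auto simp: Poly_Mapping.lookup_add lookup_single in_keys_iff)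
  have ksm: "ks ?m = insert x (ks m')"
    using assms False by (auto simp: in_keys_iff lkm split: if_splits)
  have cfc: "comp_fun_commute_on UNIV (mef \<sigma> n)" for n using mef_cfc comp_fun_commute_def' by blast
  have "mono_eval \<sigma> ?m = mef \<sigma> ?m x (Finite_Set.fold (mef \<sigma> ?m) (mps_const 1) (ks m'))"
    unfolding mono_eval_fold ksm using assms by (intro fold_mef_insert) auto
  also have "Finite_Set.fold (mef \<sigma> ?m) (mps_const 1) (ks m') = Finite_Set.fold (mef \<sigma> m') (mps_const 1) (ks m')"
    by (rule Finite_Set.fold_cong[OF cfc cfc]) (use assms in \<open>auto simp: mef_def lkm fun_eq_iff\<close>)
  finally show ?thesis by (simp add: mono_eval_fold mef_def lkm)
qed

lemma power_lin_scale: "mps_power (lin (\<lambda>w. c * a w)) k = mps_smult (c^k) (mps_power (lin a) k)"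
proof
  fix m :: mono
  show "mps_power (lin (\<lambda>w. c * a w)) k m = mps_smult (c^k) (mps_power (lin a) k) m"
  proof (cases "lk m Q = 0 \<and> deg m = k")
    case True
    have "(\<Prod>w\<in>ks m. (c * a w) ^ lk m w / fact (lk m w)) = (\<Prod>w\<in>ks m. c ^ lk m w) * (\<Prod>w\<in>ks m. a w ^ lk m w / fact (lk m w))"
      by (simp add: prod.distrib[symmetric] power_mult_distrib)
    also have "(\<Prod>w\<in>ks m. c ^ lk m w) = c ^ deg m" by (simp add: deg_def power_sum)
    finally show ?thesis using True by (simp add: power_lin H_def mps_smult_def)
  next
    case False then show ?thesis by (auto simp: power_lin H_def mps_smult_def)
  qed
qed

lemma exp_family: "mps_sum (\<lambda>k. mps_smult (c ^ k / fact k) (mps_power (lin a) k)) UNIV = G 0 (\<lambda>w. c * a w)"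
proof -
  have "mps_sum (\<lambda>k. mps_smult (c ^ k / fact k) (mps_power (lin a) k)) UNIV = mps_exp (lin (\<lambda>w. c * a w))"
    unfolding mps_exp_def power_lin_scale by (intro mps_sum_cong) (simp add: mps_smult_def fun_eq_iff)
  then show ?thesis by (simp add: exp_lin)
qed

lemma smult_zero: "mps_smult 0 f = mps_const 0"
  by (simp add: mps_smult_def mps_const_def fun_eq_iff)

lemma smult_one: "mps_smult 1 f = f"
  by (simp add: mps_smult_def fun_eq_iff)

lemma mono_eval_zero: "mono_eval \<sigma> 0 = mps_const 1"
  by (simp add: mono_eval_def)

lemma subst_G_aux:
  assumes h\<sigma>: "\<And>v. v \<noteq> Q \<Longrightarrow> \<sigma> v = lin (\<mu> v)" and hQ: "\<sigma> Q = mps_var Q"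
    and fin: "finite K" and QK: "Q \<notin> K"
  shows "mps_sum (\<lambda>m. mps_smult (G N la m) (mono_eval \<sigma> m)) {m. ks m \<subseteq> insert Q K} = G N (\<lambda>w. \<Sum>v\<in>K. la v * \<mu> v w)"
  using fin QK
proof (induction K rule: finite_induct)
  case empty
  let ?F = "\<lambda>m. mps_smult (G N la m) (mono_eval \<sigma> m)"
  let ?m0 = "Poly_Mapping.single Q N"
  have "mps_sum ?F {m. ks m \<subseteq> insert Q {}} = ?F ?m0"
  proof (rule mps_sum_one)
    show "?m0 \<in> {m. ks m \<subseteq> insert Q {}}" by simp
    fix m assume m: "m \<in> {m. ks m \<subseteq> insert Q {}}" "m \<noteq> ?m0"
    have "m = Poly_Mapping.single Q (lk m Q)"
      using m by (intro poly_mapping_eqI) (auto simp: lookup_single in_keys_iff when_def)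
    then have "lk m Q \<noteq> N" using m by auto
    then have "G N la m = 0" by (simp add: G_explicit)
    then show "?F m = mps_const 0" by (simp add: smult_zero)
  qed
  also have "\<dots> = G N (\<lambda>_. 0)"
  proof -
    have "G N la ?m0 = 1" by (simp add: G_explicit)
    moreover have "mono_eval \<sigma> ?m0 = mps_power (mps_var Q) N"
      using mono_eval_single_add[of Q 0 \<sigma> N] hQ by (simp add: mono_eval_zero mult_comm[of _ "mps_const 1"] mult_one)
    moreover have "mps_power (mps_var Q) N = G N (\<lambda>_. 0)" by (simp add: G_varQ power_G)
    ultimately show ?thesis by (simp add: smult_one)
  qed
  finally show ?case by simp
next
  case (insert x K)
  have xQ: "x \<noteq> Q" using insert by auto
  let ?F = "\<lambda>m. mps_smult (G N la m) (mono_eval \<sigma> m)"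
  let ?M' = "{m::mono. ks m \<subseteq> insert Q K}" and ?Mx = "{m::mono. ks m \<subseteq> insert Q (insert x K)}"
  let ?F1 = "\<lambda>k. mps_smult (la x ^ k / fact k) (mps_power (lin (\<mu> x)) k)"
  let ?h = "\<lambda>(k::nat, m'::mono). Poly_Mapping.single x k + m'"
  have hom: "homog 1 (\<sigma> v)" for v by (metis hQ h\<sigma> homog_varQ homog_lin)
  have bij: "bij_betw ?h ((UNIV::nat set) \<times> ?M') ?Mx"
  proof (rule bij_betw_byWitness[where f'="\<lambda>m::mono. (lk m x, m - Poly_Mapping.single x (lk m x))"])
    show "\<forall>a\<in>(UNIV::nat set) \<times> ?M'. (lk (?h a) x, ?h a - Poly_Mapping.single x (lk (?h a) x)) = a"
    proof
      fix a assume a: "a \<in> (UNIV::nat set) \<times> ?M'"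
      obtain k m' where a': "a = (k, m')" by force
      have "x \<notin> ks m'" using a a' insert xQ by auto
      then have "lk m' x = 0" by (simp add: in_keys_iff)
      then show "(lk (?h a) x, ?h a - Poly_Mapping.single x (lk (?h a) x)) = a"
        using a' by (simp add: Poly_Mapping.lookup_add)
    qed
    show "\<forall>m\<in>?Mx. ?h (lk m x, m - Poly_Mapping.single x (lk m x)) = m"
    proof
      fix m :: mono
      show "?h (lk m x, m - Poly_Mapping.single x (lk m x)) = m"
        by (auto intro!: poly_mapping_eqI simp: Poly_Mapping.lookup_add lookup_minus lookup_single when_def)
    qed
    show "?h ` ((UNIV::nat set) \<times> ?M') \<subseteq> ?Mx"
    proof
      fix m assume "m \<in> ?h ` ((UNIV::nat set) \<times> ?M')"
      then obtain k m' where m: "m = Poly_Mapping.single x k + m'" "ks m' \<subseteq> insert Q K" by auto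
      have "ks m \<subseteq> ks (Poly_Mapping.single x k) \<union> ks m'" unfolding m(1) by (rule keys_add)
      then show "m \<in> ?Mx" using m(2) by (auto split: if_splits)
    qed
    show "(\<lambda>m. (lk m x, m - Poly_Mapping.single x (lk m x))) ` ?Mx \<subseteq> (UNIV::nat set) \<times> ?M'"
    proof
      fix p assume "p \<in> (\<lambda>m. (lk m x, m - Poly_Mapping.single x (lk m x))) ` ?Mx"
      then obtain m where m: "ks m \<subseteq> insert Q (insert x K)" "p = (lk m x, m - Poly_Mapping.single x (lk m x))" by auto
      have "ks (m - Poly_Mapping.single x (lk m x)) \<subseteq> insert Q K"
      proof
        fix w assume "w \<in> ks (m - Poly_Mapping.single x (lk m x))"
        then have "lk m w - (if x = w then lk m x else 0) \<noteq> 0"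
          by (simp add: in_keys_iff lookup_minus lookup_single when_def)
        then have "w \<noteq> x" "w \<in> ks m" by (auto simp: in_keys_iff split: if_splits)
        then show "w \<in> insert Q K" using m(1) by auto
      qed
      then show "p \<in> (UNIV::nat set) \<times> ?M'" using m(2) by simp
    qed
  qed
  have lf1: "LF ?F1 UNIV (\<lambda>k. k)"
    unfolding LF_def
  proof (intro conjI ballI allI impI)
    fix k m assume "?F1 k m \<noteq> 0"
    moreover have "homog k (?F1 k)" by (intro homog_smult homog_power homog_lin)
    ultimately show "k \<le> deg m" unfolding homog_def by auto
  qed simp
  have lf2: "LF ?F ?M' deg"
    unfolding LF_def
  proof (intro conjI ballI allI impI)
    fix m' m assume "?F m' m \<noteq> 0"
    moreover have "homog (deg m') (?F m')" by (intro homog_smult homog_mono_eval hom)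
    ultimately show "deg m' \<le> deg m" unfolding homog_def by auto
  next
    fix D
    have "{m'\<in>?M'. deg m' \<le> D} = {m. ks m \<subseteq> insert Q K \<and> deg m \<le> D}" by auto
    then show "finite {m'\<in>?M'. deg m' \<le> D}" using finite_bounded[of "insert Q K" D] insert by simp
  qed
  have "mps_sum ?F ?Mx = mps_sum (\<lambda>p. ?F (?h p)) ((UNIV::nat set) \<times> ?M')"
    by (rule sum_reindex[OF bij])
  also have "\<dots> = mps_sum (\<lambda>(k,m'). mps_mult (?F1 k) (?F m')) ((UNIV::nat set) \<times> ?M')"
  proof (rule mps_sum_cong)
    fix p assume p: "p \<in> (UNIV::nat set) \<times> ?M'"
    obtain k m' where p': "p = (k, m')" by force
    have xm': "x \<notin> ks m'" using p p' insert xQ by auto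
    show "?F (?h p) = (\<lambda>(k,m'). mps_mult (?F1 k) (?F m')) p"
      unfolding p' using xm' xQ
      by (simp add: G_single_add mono_eval_single_add h\<sigma> mult_smult mult_smult_right)
         (simp add: mps_smult_def fun_eq_iff)
  qed
  also have "\<dots> = mps_mult (mps_sum ?F1 UNIV) (mps_sum ?F ?M')"
    by (rule mult_sums[OF lf1 lf2, symmetric])
  also have "\<dots> = mps_mult (G 0 (\<lambda>w. la x * \<mu> x w)) (G N (\<lambda>w. \<Sum>v\<in>K. la v * \<mu> v w))"
    using insert by (simp add: exp_family)
  also have "\<dots> = G N (\<lambda>w. \<Sum>v\<in>insert x K. la v * \<mu> v w)"
    using insert by (simp add: G_mult)
  finally show ?case .
qed

lemma G_supp: "G N la m \<noteq> 0 \<Longrightarrow> w \<in> ks m \<Longrightarrow> w \<noteq> Q \<Longrightarrow> la w \<noteq> 0"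
proof (rule ccontr)
  assume G: "G N la m \<noteq> 0" and w: "w \<in> ks m" "w \<noteq> Q" and "\<not> la w \<noteq> 0"
  then have "la w = 0" by simp
  moreover have "lk m w \<noteq> 0" using w by (simp add: in_keys_iff)
  ultimately have "(\<Prod>w\<in>ks m - {Q}. (la w)^(lk m w) / fact (lk m w)) = 0"
    using w by (intro prod_zero) (auto intro!: bexI[of _ w])
  then show False using G by (simp add: G_explicit split: if_splits)
qed

lemma subst_G:
  assumes h\<sigma>: "\<And>v. v \<noteq> Q \<Longrightarrow> \<sigma> v = lin (\<mu> v)" and hQ: "\<sigma> Q = mps_var Q"
    and fin: "finite K" and QK: "Q \<notin> K" and la0: "\<And>w. w \<notin> K \<Longrightarrow> w \<noteq> Q \<Longrightarrow> la w = 0"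
  shows "mps_subst \<sigma> (G N la) = G N (\<lambda>w. \<Sum>v\<in>K. la v * \<mu> v w)"
proof -
  have "mps_subst \<sigma> (G N la) = mps_sum (\<lambda>m. mps_smult (G N la m) (mono_eval \<sigma> m)) {m. ks m \<subseteq> insert Q K}"
    unfolding mps_subst_def
  proof (rule mps_sum_subset)
    fix m :: mono assume "m \<notin> {m. ks m \<subseteq> insert Q K}"
    then obtain w where "w \<in> ks m" "w \<notin> insert Q K" by auto
    then have "G N la m = 0" using G_supp[of N la m w] la0 by auto
    then show "mps_smult (G N la m) (mono_eval \<sigma> m) = mps_const 0" by (simp add: smult_zero)
  qed simp
  also have "\<dots> = G N (\<lambda>w. \<Sum>v\<in>K. la v * \<mu> v w)"
    by (rule subst_G_aux[of \<sigma> \<mu>, OF h\<sigma> hQ fin QK])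
  finally show ?thesis .
qed

definition \<mu>0 :: "nat \<Rightarrow> var \<Rightarrow> var \<Rightarrow> rat" where
  "\<mu>0 l v = (case v of Q \<Rightarrow> (\<lambda>_. 0) | X j \<Rightarrow> ys (l + 1 - j) | Y j \<Rightarrow> (\<lambda>w. xv l (l + 1 - j) w - xv l (l + 2 - j) w))"

lemma RHS3:
  "Tgen l = mps_subst (\<lambda>v. case v of
                       Q \<Rightarrow> mps_var Q
                     | X j \<Rightarrow> Ysum (l + 1 - j)
                     | Y j \<Rightarrow> mps_sub (Xv l (l + 1 - j)) (Xv l (l + 2 - j))) (Tgen l)"
proof -
  let ?\<sigma> = "\<lambda>v. case v of
                       Q \<Rightarrow> mps_var Q
                     | X j \<Rightarrow> Ysum (l + 1 - j)
                     | Y j \<Rightarrow> mps_sub (Xv l (l + 1 - j)) (Xv l (l + 2 - j))"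
  let ?A = "\<lambda>j. dl (Y j)" and ?B = "\<lambda>j. dl (X j)"
  have h\<sigma>: "?\<sigma> v = lin (\<mu>0 l v)" if "v \<noteq> Q" for v
    using that by (cases v) (simp_all add: \<mu>0_def Ysum_lin Xv_lin sub_lin)
  have hQ: "?\<sigma> Q = mps_var Q" by simp
  have hom: "homog 1 (?\<sigma> v)" for v by (metis hQ h\<sigma> homog_varQ homog_lin)
  have finW: "finite (Wl l)" unfolding Wl_img by simp
  have QW: "Q \<notin> Wl l" unfolding Wl_def by auto
  have supp: "ks m \<subseteq> insert Q (Wl l)" if "x \<in> JJ l" "(\<lambda>(u,v). G (NF u v) (LFF ?A ?B u v)) x m \<noteq> 0" for x m
  proof
    fix w assume w: "w \<in> ks m"
    obtain u v where x: "x = (u,v)" by force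
    have lu: "length u = l" using that x by (auto simp: JJ_def decr_tuples_def)
    show "w \<in> insert Q (Wl l)"
    proof (rule ccontr)
      assume "w \<notin> insert Q (Wl l)"
      then have "LFF ?A ?B u v w = 0" "w \<noteq> Q" using LFF1_other[of w u v] lu by auto
      then show False using G_supp[of "NF u v" "LFF ?A ?B u v" m w] that x w by auto
    qed
  qed
  have "mps_subst ?\<sigma> (Tgen l) = mps_sum (\<lambda>x. mps_subst ?\<sigma> ((\<lambda>(u,v). G (NF u v) (LFF ?A ?B u v)) x)) (JJ l)"
    unfolding T1 by (rule subst_sum[OF LF_JJ _ supp hom]) (simp add: finW)
  also have "\<dots> = mps_sum (\<lambda>(u,v). G (NF u v) (LFF (A2 l) (B2 l) u v)) (JJ l)"
  proof (rule mps_sum_cong)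
    fix x assume x: "x \<in> JJ l"
    obtain u v where xuv: "x = (u,v)" by force
    have lu: "length u = l" using x xuv by (auto simp: JJ_def decr_tuples_def)
    have "mps_subst ?\<sigma> (G (NF u v) (LFF ?A ?B u v)) = G (NF u v) (\<lambda>w. \<Sum>v'\<in>Wl l. LFF ?A ?B u v v' * \<mu>0 l v' w)"
      by (rule subst_G[of ?\<sigma> "\<mu>0 l", OF h\<sigma> hQ finW QW]) (use LFF1_other lu in auto)
    also have "(\<lambda>w. \<Sum>v'\<in>Wl l. LFF ?A ?B u v v' * \<mu>0 l v' w) = LFF (A2 l) (B2 l) u v"
    proof
      fix w
      have "(\<Sum>v'\<in>Wl l. LFF ?A ?B u v v' * \<mu>0 l v' w) =
            (\<Sum>v'\<in>(\<lambda>i. X (Suc i)) ` {..<l}. LFF ?A ?B u v v' * \<mu>0 l v' w) +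
            (\<Sum>v'\<in>(\<lambda>i. Y (Suc i)) ` {..<l}. LFF ?A ?B u v v' * \<mu>0 l v' w)"
        unfolding Wl_img by (rule sum.union_disjoint) auto
      also have "\<dots> = (\<Sum>i<l. LFF ?A ?B u v (X (Suc i)) * \<mu>0 l (X (Suc i)) w) +
            (\<Sum>i<l. LFF ?A ?B u v (Y (Suc i)) * \<mu>0 l (Y (Suc i)) w)"
        by (simp add: sum.reindex inj_on_def)
      also have "\<dots> = (\<Sum>i<l. of_nat (v!i) * B2 l (Suc i) w) + (\<Sum>i<l. of_nat (u!i) * A2 l (Suc i) w)"
      proof -
        have "(\<Sum>i<l. LFF ?A ?B u v (X (Suc i)) * \<mu>0 l (X (Suc i)) w) = (\<Sum>i<l. of_nat (v!i) * B2 l (Suc i) w)"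
        proof (rule sum.cong[OF refl])
          fix i assume i: "i \<in> {..<l}"
          then have "l + 1 - Suc i = l - Suc i + 1" by auto
          then show "LFF ?A ?B u v (X (Suc i)) * \<mu>0 l (X (Suc i)) w = of_nat (v!i) * B2 l (Suc i) w"
            using i lu by (simp add: LFF1_X \<mu>0_def B2_def)
        qed
        moreover have "(\<Sum>i<l. LFF ?A ?B u v (Y (Suc i)) * \<mu>0 l (Y (Suc i)) w) = (\<Sum>i<l. of_nat (u!i) * A2 l (Suc i) w)"
          using lu by (intro sum.cong refl) (simp add: LFF1_Y \<mu>0_def A2_def)
        ultimately show ?thesis by simp
      qed
      also have "\<dots> = LFF (A2 l) (B2 l) u v w"
        unfolding LFF_def lu by (simp add: sum.distrib)
      finally show "(\<Sum>v'\<in>Wl l. LFF ?A ?B u v v' * \<mu>0 l v' w) = LFF (A2 l) (B2 l) u v w" .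
    qed
    finally show "mps_subst ?\<sigma> ((\<lambda>(u,v). G (NF u v) (LFF ?A ?B u v)) x) = (\<lambda>(u,v). G (NF u v) (LFF (A2 l) (B2 l) u v)) x"
      using xuv by simp
  qed
  also have "\<dots> = Tgen l" unfolding T2 T1 ..
  finally show ?thesis ..
qed

theorem theorem2p3:
  fixes l :: nat
  assumes "1 \<le> l"
  shows "Tgen l = mps_sum (\<lambda>u. mps_listprod
                    (map (\<lambda>j. mps_mult (En (u ! (j - 1)) (mps_var (Y j)))
                                      (Ln (u ! (j - 1)) (mps_var (X j)))) [1..<l+1]))
                  (decr_tuples l)
       \<and> Tgen l = mps_sum (\<lambda>u. mps_listprod
                    (map (\<lambda>j. mps_mult (En (u ! (j - 1)) (mps_sub (Xv l (l + 1 - j)) (Xv l (l + 2 - j))))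
                                      (Ln (u ! (j - 1)) (Ysum (l - j + 1)))) [1..<l+1]))
                  (decr_tuples l)
       \<and> Tgen l = mps_subst (\<lambda>v. case v of
                       Q \<Rightarrow> mps_var Q
                     | X j \<Rightarrow> Ysum (l + 1 - j)
                     | Y j \<Rightarrow> mps_sub (Xv l (l + 1 - j)) (Xv l (l + 2 - j))) (Tgen l)"
  using RHS1 RHS2 RHS3 by blast

end
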